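(* Let $G$ be a finite $p$-group for some prime $p$. Then the poset $\overline{C}(G)$ of conjugacy classes of cyclic subgroups of $G$ possesses a breaking point if and only if $G$ is either a cyclic $p$-group of order at least $p^2$, or a generalized quaternion $2$-group $Q_{2^n}$ for some $n\geq 3$.
   Context: For a finite group $G$, let $\overline{C}(G)=\{[H]\mid H \text{ a cyclic subgroup of } G\}$, where $[H]$ is the conjugacy class of $H$, partially ordered by $[H_1]\leq[H_2]$ if and only if $H_1\subseteq H_2^g$ for some $g\in G$. A breaking point of $\overline{C}(G)$ is a class $[H]$ with $H\neq 1$ and $H\neq G$ such that for every $[X]\in\overline{C}(G)$ we have $[X]\leq[H]$ or $[H]\leq[X]$. For $n\geq 3$, the generalized quaternion $2$-group is $Q_{2^n}=\langle a,b \mid a^{2^{n-2}}=b^2,\ a^{2^{n-1}}=1,\ b^{-1}ab=a^{-1}\rangle$, of order $2^n$. *)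

theory Defs
  imports "HOL-Algebra.Algebra"
begin

definition conj_set :: "('a, 'b) monoid_scheme \<Rightarrow> 'a \<Rightarrow> 'a set \<Rightarrow> 'a set" where
  "conj_set G g K = {g \<otimes>\<^bsub>G\<^esub> k \<otimes>\<^bsub>G\<^esub> inv\<^bsub>G\<^esub> g | k. k \<in> K}"

text \<open>The order on conjugacy classes: [H] <= [K] iff H is contained in some conjugate of K.\<close>
definition cls_le :: "('a, 'b) monoid_scheme \<Rightarrow> 'a set \<Rightarrow> 'a set \<Rightarrow> bool" where
  "cls_le G H K \<longleftrightarrow> (\<exists>g \<in> carrier G. H \<subseteq> conj_set G g K)"

text \<open>Cyclic subgroups of G are exactly the sets generate G {x}, x in carrier G.\<close>
definition has_breaking_point :: "('a, 'b) monoid_scheme \<Rightarrow> bool" where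
  "has_breaking_point G \<longleftrightarrow>
     (\<exists>x \<in> carrier G.
        generate G {x} \<noteq> {\<one>\<^bsub>G\<^esub>} \<and> generate G {x} \<noteq> carrier G \<and>
        (\<forall>y \<in> carrier G. cls_le G (generate G {y}) (generate G {x})
                        \<or> cls_le G (generate G {x}) (generate G {y})))"

definition is_cyclic_group :: "('a, 'b) monoid_scheme \<Rightarrow> bool" where
  "is_cyclic_group G \<longleftrightarrow> (\<exists>x \<in> carrier G. generate G {x} = carrier G)"

definition is_gen_quaternion :: "('a, 'b) monoid_scheme \<Rightarrow> nat \<Rightarrow> bool" where
  "is_gen_quaternion G n \<longleftrightarrow> n \<ge> 3 \<and> order G = 2 ^ n \<and>
     (\<exists>a \<in> carrier G. \<exists>b \<in> carrier G. generate G {a, b} = carrier G \<and>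
        a [^]\<^bsub>G\<^esub> ((2::nat) ^ (n - 2)) = b [^]\<^bsub>G\<^esub> (2::nat) \<and>
        a [^]\<^bsub>G\<^esub> ((2::nat) ^ (n - 1)) = \<one>\<^bsub>G\<^esub> \<and>
        inv\<^bsub>G\<^esub> b \<otimes>\<^bsub>G\<^esub> a \<otimes>\<^bsub>G\<^esub> b = inv\<^bsub>G\<^esub> a)"

end

theory Submission
  imports Defs
begin

lemma geom_int: "((r::int) - 1) * (\<Sum>i<n. r^i) = r^n - 1"
  by (induction n) (auto simp: algebra_simps)

lemma solve_lin:
  fixes u M s :: int
  assumes "coprime u M"
  shows "\<exists>j. M dvd s + j * u"
proof -
  obtain x y where "x * u + y * M = gcd u M" using bezout_int by blast
  with assms have xy: "x * u + y * M = 1" by simp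
  have e1: "1 - x * u = y * M" using xy by linarith
  have "s + (- s * x) * u = s * (1 - x * u)" by (simp add: algebra_simps)
  also have "\<dots> = M * (s * y)" unfolding e1 by (simp add: algebra_simps)
  finally show ?thesis by (intro exI[of _ "- s * x"]) simp
qed

lemma pow_sq_cong:
  fixes P t :: int
  shows "P^2 dvd (1 + P*t)^i - 1 - int i * P * t"
proof (induction i)
  case 0 then show ?case by simp
next
  case (Suc i)
  then obtain q where q: "(1 + P*t)^i = 1 + int i * P * t + P^2 * q"
    by (metis dvd_def diff_diff_eq eq_diff_eq add.commute)
  have "(1 + P*t)^(Suc i) - 1 - int (Suc i) * P * t
        = P^2 * (q + int i * t^2 + P * t * q)"
    by (simp add: q power2_eq_square algebra_simps)
  then show ?case by simp
qed

lemma sum_sq_cong: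
  fixes P t :: int
  shows "P^2 dvd 2 * (\<Sum>i<n. (1 + P*t)^i) - 2 * int n - P * t * int n * (int n - 1)"
proof (induction n)
  case 0 then show ?case by simp
next
  case (Suc n)
  have a: "P^2 dvd 2 * ((1 + P*t)^n - 1 - int n * P * t)"
    using pow_sq_cong[of P t n] by (rule dvd_mult)
  have "2 * (\<Sum>i<Suc n. (1 + P*t)^i) - 2 * int (Suc n) - P * t * int (Suc n) * (int (Suc n) - 1)
     = (2 * (\<Sum>i<n. (1 + P*t)^i) - 2 * int n - P * t * int n * (int n - 1))
       + 2 * ((1 + P*t)^n - 1 - int n * P * t)"
    by (simp add: algebra_simps)
  then show ?case using Suc a by (metis dvd_add)
qed

lemma NT_main:
  fixes p m :: nat and r s :: int
  assumes pp: "Factorial_Ring.prime p" and m1: "m \<ge> 1"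
    and h1: "int p ^ m dvd r ^ p - 1"
    and h2: "\<not> int p ^ m dvd r - 1"
    and h3: "int p ^ m dvd s * (r - 1)"
    and h4: "\<forall>j. \<not> int p ^ m dvd s + j * (\<Sum>i<p. r^i)"
  shows "p = 2 \<and> m \<ge> 2 \<and> 2 ^ m dvd r + 1 \<and> 2 ^ m dvd s - 2 ^ (m - 1)"
proof -
  define P where "P = int p"
  have pP: "Factorial_Ring.prime P" using pp by (simp add: P_def)
  define S where "S = (\<Sum>i<p. r^i)"
  have h1': "P ^ m dvd r ^ p - 1" using h1 by (simp add: P_def)
  have h2': "\<not> P ^ m dvd r - 1" using h2 by (simp add: P_def)
  have h3': "P ^ m dvd s * (r - 1)" using h3 by (simp add: P_def)
  have h4': "\<And>j. \<not> P ^ m dvd s + j * S" using h4 by (simp add: P_def S_def)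
  have P1: "P > 1" using pP prime_gt_1_int by blast
  have Pr: "P dvd r - 1"
  proof (rule ccontr)
    assume "\<not> P dvd r - 1"
    then have "coprime P (r - 1)" using pP prime_imp_coprime by blast
    then have "coprime (P^m) (r - 1)" by simp
    then have "P ^ m dvd s" using h3' coprime_dvd_mult_left_iff by blast
    then show False using h4'[of 0] by simp
  qed
  then obtain t where t: "r = 1 + P * t" by (metis dvd_def diff_eq_eq add.commute)
  have Ps: "P dvd s"
  proof (rule ccontr)
    assume "\<not> P dvd s"
    then have "coprime P s" using pP prime_imp_coprime by blast
    then have "coprime (P^m) s" by simp
    then have "P ^ m dvd r - 1" using h3' coprime_dvd_mult_right_iff by blast
    then show False using h2' by simp
  qed
  then obtain s' where s': "s = P * s'" by (metis dvd_def)
  show ?thesis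
  proof (cases "p = 2")
    case False
    have "p \<ge> 2" using pp prime_ge_2_nat by blast
    then have P3: "P \<ge> 3" using False by (simp add: P_def)
    have X: "P^2 dvd 2 * S - 2 * int p - P * t * int p * (int p - 1)"
      using sum_sq_cong[of P t p] by (simp add: S_def t)
    have eq: "2 * S - 2 * P = (2 * S - 2 * int p - P * t * int p * (int p - 1)) + P^2 * (t * (P - 1))"
      by (simp add: P_def power2_eq_square algebra_simps)
    have A: "P^2 dvd 2 * S - 2 * P"
      unfolding eq by (rule dvd_add[OF X dvd_triv_left])
    have "P dvd P^2" by (simp add: power2_eq_square)
    then have "P dvd 2 * S - 2 * P" using A by (rule dvd_trans)
    moreover have "2 * S = (2 * S - 2 * P) + P * 2" by simp
    ultimately have "P dvd 2 * S" by (metis dvd_add dvd_triv_left)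
    moreover have "\<not> P dvd 2"
    proof
      assume "P dvd 2"
      then have "P \<le> 2" by (rule zdvd_imp_le) simp
      then show False using P3 by simp
    qed
    ultimately have "P dvd S" using pP prime_dvd_mult_iff by blast
    then obtain u where u: "S = P * u" by (metis dvd_def)
    have "\<not> P dvd u"
    proof
      assume "P dvd u"
      then have "P^2 dvd S" using u by (simp add: power2_eq_square)
      moreover have "2 * P = 2 * S - (2 * S - 2 * P)" by simp
      ultimately have "P^2 dvd 2 * P" using A by (metis dvd_diff dvd_mult)
      then have "P dvd 2" using P1 by (simp add: power2_eq_square)
      then show False using \<open>\<not> P dvd 2\<close> by simp
    qed
    then have "coprime u P" using pP prime_imp_coprime coprime_commute by blast
    then have "coprime u (P^(m-1))" by simp
    then obtain j where j: "P^(m-1) dvd s' + j * u" using solve_lin by blast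
    have "P^m = P * P^(m-1)" using m1 by (cases m) auto
    then have "P^m dvd P * (s' + j * u)" using j by simp
    moreover have "P * (s' + j * u) = s + j * S" by (simp add: s' u algebra_simps)
    ultimately have "P^m dvd s + j * S" by simp
    then show ?thesis using h4' by blast
  next
    case True
    then have P2: "P = 2" by (simp add: P_def)
    have SS: "S = 2 + 2 * t" using True t P2 by (simp add: S_def numeral_2_eq_2)
    have rr: "r^2 - 1 = 4 * (t * (t + 1))" using t P2 by (simp add: power2_eq_square algebra_simps)
    have m2: "m \<ge> 2"
    proof (rule ccontr)
      assume "\<not> m \<ge> 2"
      then have "m = 1" using m1 by simp
      then show False using h2' t P2 by simp
    qed
    show ?thesis
    proof (cases "even t")
      case True
      then have ot: "odd (t + 1)" by simp
      then have cp: "coprime (t + 1) (2^(m-1))" by simp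
      show ?thesis
      proof (cases "even s")
        case True
        then obtain s2 where s2: "s = 2 * s2" by blast
        obtain j where j: "2^(m-1) dvd s2 + j * (t + 1)" using solve_lin[OF cp] by blast
        have e: "(2::int)^m = 2 * 2^(m-1)" using m1 by (cases m) auto
        have "2 * 2^(m-1) dvd 2 * (s2 + j * (t + 1))" using j by (rule mult_dvd_mono[OF dvd_refl])
        then have "2^m dvd s + j * S" by (simp only: e) (simp add: s2 SS algebra_simps)
        then show ?thesis using h4' P2 by blast
      next
        case False
        then have "coprime (2^m) s" by simp
        then have "2 ^ m dvd r - 1" using h3' P2 coprime_dvd_mult_right_iff by blast
        then show ?thesis using h2' P2 by simp
      qed
    next
      case False
      then have ct: "coprime (2^k) t" for k :: nat by simp
      have e1: "(2::int)^m = 2 * 2^(m-1)" using m1 by (cases m) auto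
      have e2: "(2::int)^m = 4 * 2^(m-2)" using m2 by (cases m; cases "m - 1") auto
      have e3: "(2::int)^(m-1) = 2 * 2^(m-2)" using m2 by (cases m; cases "m - 1") auto
      have "2^m dvd s * (2 * t)" using h3' t P2 by simp
      then have "2 * 2^(m-1) dvd 2 * (s * t)" by (simp only: e1) (simp add: algebra_simps)
      then have "2^(m-1) dvd s * t" by (simp add: dvd_mult_cancel_left)
      then have "2^(m-1) dvd s" using ct coprime_dvd_mult_left_iff by blast
      then obtain \<sigma> where sg: "s = 2^(m-1) * \<sigma>" by (metis dvd_def)
      have "2^m dvd 4 * (t * (t + 1))" using h1' rr P2 True by simp
      then have "4 * 2^(m-2) dvd 4 * (t * (t + 1))" by (simp only: e2)
      then have "2^(m-2) dvd t * (t + 1)" by (simp add: dvd_mult_cancel_left)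
      then have "2^(m-2) dvd t + 1" using ct coprime_dvd_mult_right_iff by blast
      then obtain \<tau> where tg: "t + 1 = 2^(m-2) * \<tau>" by (metis dvd_def)
      have S2: "S = 2^(m-1) * \<tau>" using SS tg e3 by (simp add: algebra_simps)
      have so: "odd \<sigma>"
      proof
        assume "even \<sigma>"
        then obtain k where "\<sigma> = 2 * k" by blast
        then have "s = 2^m * k" using sg e1 by simp
        then have "2^m dvd s" by simp
        then show False using h4'[of 0] P2 by simp
      qed
      have te: "even \<tau>"
      proof (rule ccontr)
        assume "odd \<tau>"
        then have "even (\<sigma> + \<tau>)" using so by simp
        then obtain k where k: "\<sigma> + \<tau> = 2 * k" by blast
        have "s + 1 * S = 2^(m-1) * (\<sigma> + \<tau>)" using sg S2 by (simp add: algebra_simps)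
        also have "\<dots> = 2^m * k" using k e1 by simp
        finally have "2^m dvd s + 1 * S" by simp
        then show False using h4'[of 1] P2 by blast
      qed
      then obtain k where k: "\<tau> = 2 * k" by blast
      have "r + 1 = 2^(m-1) * \<tau>" using S2 SS t P2 by simp
      also have "\<dots> = 2^m * k" using k e1 by simp
      finally have A: "2^m dvd r + 1" by simp
      obtain k' where "\<sigma> = 2 * k' + 1" using so oddE by blast
      then have k': "\<sigma> - 1 = 2 * k'" by simp
      have "s - 2^(m-1) = 2^(m-1) * (\<sigma> - 1)" using sg by (simp add: algebra_simps)
      also have "\<dots> = 2^m * k'" using k' e1 by simp
      finally have B: "2^m dvd s - 2^(m-1)" by simp
      show ?thesis using True A B m2 by simp
    qed
  qed
qed


lemma mk_action:
  fixes G (structure)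
  assumes G: "group G"
    and cl: "\<And>g x. g \<in> carrier G \<Longrightarrow> x \<in> E \<Longrightarrow> f g x \<in> E"
    and one: "\<And>x. x \<in> E \<Longrightarrow> f \<one>\<^bsub>G\<^esub> x = x"
    and mul: "\<And>g h x. g \<in> carrier G \<Longrightarrow> h \<in> carrier G \<Longrightarrow> x \<in> E \<Longrightarrow> f (g \<otimes>\<^bsub>G\<^esub> h) x = f g (f h x)"
  shows "group_action G E (\<lambda>g. restrict (f g) E)"
proof -
  interpret group G by (rule G)
  have bij: "restrict (f g) E \<in> Bij E" if g: "g \<in> carrier G" for g
  proof -
    have inj: "inj_on (f g) E"
    proof (rule inj_onI)
      fix x y assume x: "x \<in> E" and y: "y \<in> E" and e: "f g x = f g y"
      have "x = f (inv g \<otimes> g) x" using x g one by simp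
      also have "\<dots> = f (inv g) (f g x)" using x g by (intro mul) auto
      also have "\<dots> = f (inv g) (f g y)" using e by simp
      also have "\<dots> = f (inv g \<otimes> g) y" using y g by (intro mul[symmetric]) auto
      also have "\<dots> = y" using y g one by simp
      finally show "x = y" .
    qed
    have sur: "f g ` E = E"
    proof
      show "f g ` E \<subseteq> E" using cl g by blast
      show "E \<subseteq> f g ` E"
      proof
        fix y assume y: "y \<in> E"
        have "y = f (g \<otimes> inv g) y" using y g one by simp
        also have "\<dots> = f g (f (inv g) y)" using y g by (intro mul) auto
        finally show "y \<in> f g ` E" using cl y g by blast
      qed
    qed
    show ?thesis unfolding Bij_def using inj sur
      by (simp add: bij_betw_def inj_on_def)
  qed
  show ?thesis
    unfolding group_action_def group_hom_def group_hom_axioms_def hom_def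
  proof (intro conjI CollectI ballI)
    show "group G" by (rule G)
    show "group (BijGroup E)" by (rule group_BijGroup)
    show "(\<lambda>g. restrict (f g) E) \<in> carrier G \<rightarrow> carrier (BijGroup E)"
      using bij by (auto simp: BijGroup_def)
    fix g h assume g: "g \<in> carrier G" and h: "h \<in> carrier G"
    show "restrict (f (g \<otimes> h)) E = restrict (f g) E \<otimes>\<^bsub>BijGroup E\<^esub> restrict (f h) E"
      using bij[OF g] bij[OF h] g h cl mul
      by (auto simp: BijGroup_def compose_def restrict_def fun_eq_iff)
  qed
qed

lemma (in group_action) fixed_points_mod:
  assumes finE: "finite E" and finG: "finite (carrier G)"
    and pp: "Factorial_Ring.prime p" and ord: "order G = p ^ k"
  shows "card E mod p = card {x \<in> E. \<forall>g \<in> carrier G. \<phi> g x = x} mod p"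
proof -
  define F where "F = {x \<in> E. \<forall>g \<in> carrier G. \<phi> g x = x}"
  have grp: "group G" using group_hom group_hom.axioms(1) by blast
  interpret GG: group G by (rule grp)
  have one_fix: "\<phi> \<one>\<^bsub>G\<^esub> x = x" if "x \<in> E" for x
    using id_eq_one that by (metis restrict_apply')
  have self: "x \<in> orbit G \<phi> x" if "x \<in> E" for x
    using one_fix[OF that] GG.one_closed unfolding orbit_def by force
  have card_orb: "\<exists>i. card (orbit G \<phi> x) = p ^ i" if "x \<in> E" for x
  proof -
    have "card (orbit G \<phi> x) dvd p ^ k"
      using orbit_stabilizer_theorem[OF that] ord by (metis dvd_triv_left)
    then show ?thesis using pp divides_primepow_nat by blast
  qed
  have orbF: "card (orbit G \<phi> x) = 1 \<longleftrightarrow> x \<in> F" if x: "x \<in> E" for x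
  proof
    assume "card (orbit G \<phi> x) = 1"
    then obtain y where y: "orbit G \<phi> x = {y}" using card_1_singletonE by blast
    then have ox: "orbit G \<phi> x = {x}" using self[OF x] by simp
    show "x \<in> F" unfolding F_def using x ox unfolding orbit_def by blast
  next
    assume "x \<in> F"
    then have "orbit G \<phi> x = {x}" unfolding F_def orbit_def using one_fix[OF x] GG.one_closed by force
    then show "card (orbit G \<phi> x) = 1" by simp
  qed
  have finO: "finite (orbits G E \<phi>)"
  proof -
    have "orbits G E \<phi> \<subseteq> Pow E"
      unfolding orbits_def orbit_def using element_image by blast
    then show ?thesis using finE finite_subset by blast
  qed
  have ds: "(\<Sum>orb\<in>orbits G E \<phi>. \<Sum>x\<in>orb. (1::nat)) = (\<Sum>x\<in>E. 1)"
    by (rule disjoint_sum[OF finE])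
  have cE: "card E = (\<Sum>orb\<in>orbits G E \<phi>. card orb)" using ds by simp
  have trm: "card orb mod p = (if card orb = 1 then 1 else 0) mod p" if orbm: "orb \<in> orbits G E \<phi>" for orb
  proof -
    obtain x where x: "x \<in> E" "orb = orbit G \<phi> x" using orbm unfolding orbits_def by blast
    then obtain i where i: "card orb = p ^ i" using card_orb by blast
    show ?thesis
    proof (cases i)
      case 0 then show ?thesis using i by simp
    next
      case (Suc j)
      then have "p dvd card orb" using i by simp
      moreover have "card orb \<noteq> 1" using i Suc prime_gt_1_nat[OF pp]
        by (simp add: nat_power_eq_Suc_0_iff)
      ultimately show ?thesis by simp
    qed
  qed
  have "card E mod p = (\<Sum>orb\<in>orbits G E \<phi>. card orb mod p) mod p"
    unfolding cE by (simp add: mod_sum_eq)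
  also have "\<dots> = (\<Sum>orb\<in>orbits G E \<phi>. (if card orb = 1 then 1 else 0) mod p) mod p"
    using trm by (metis (no_types, lifting) sum.cong)
  also have "\<dots> = (\<Sum>orb\<in>orbits G E \<phi>. (if card orb = 1 then 1 else 0)) mod p"
    by (simp add: mod_sum_eq)
  also have "(\<Sum>orb\<in>orbits G E \<phi>. (if card orb = 1 then 1 else 0)) = card {orb \<in> orbits G E \<phi>. card orb = 1}"
    using finO by (simp add: sum.If_cases Int_def)
  also have "{orb \<in> orbits G E \<phi>. card orb = 1} = (\<lambda>x. {x}) ` F"
  proof
    show "{orb \<in> orbits G E \<phi>. card orb = 1} \<subseteq> (\<lambda>x. {x}) ` F"
    proof
      fix orb assume "orb \<in> {orb \<in> orbits G E \<phi>. card orb = 1}"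
      then obtain x where x: "x \<in> E" "orb = orbit G \<phi> x" "card orb = 1" unfolding orbits_def by blast
      then have "x \<in> F" using orbF by blast
      moreover have "orb = {x}" using x self by (metis card_1_singletonE singletonD)
      ultimately show "orb \<in> (\<lambda>x. {x}) ` F" by blast
    qed
    show "(\<lambda>x. {x}) ` F \<subseteq> {orb \<in> orbits G E \<phi>. card orb = 1}"
    proof
      fix orb assume "orb \<in> (\<lambda>x. {x}) ` F"
      then obtain x where x: "x \<in> F" "orb = {x}" by blast
      then have xE: "x \<in> E" unfolding F_def by blast
      have "orbit G \<phi> x = {x}" using x(1) self[OF xE] unfolding F_def orbit_def by auto
      then show "orb \<in> {orb \<in> orbits G E \<phi>. card orb = 1}" using x xE unfolding orbits_def by auto
    qed
  qed
  also have "card ((\<lambda>x. {x}) ` F) = card F" by (simp add: card_image)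
  finally show ?thesis unfolding F_def .
qed


lemma card_mod_other:
  assumes "finite F" "a \<in> F" "card F mod p = 0" "(p::nat) > 1"
  shows "\<exists>b\<in>F. b \<noteq> a"
proof (rule ccontr)
  assume "\<not> ?thesis"
  then have "F = {a}" using assms(2) by blast
  then show False using assms by simp
qed

locale pgrp = group G for G (structure) + fixes p :: nat
  assumes fin: "finite (carrier G)" and pp: "Factorial_Ring.prime p"
    and pk: "\<exists>k. order G = p ^ k"
begin

lemma p_gt1: "p > 1" using pp prime_gt_1_nat by blast

lemma center_exists:
  assumes "order G \<noteq> 1"
  shows "\<exists>w\<in>carrier G. w \<noteq> \<one> \<and> (\<forall>y\<in>carrier G. w \<otimes> y = y \<otimes> w)"
proof -
  obtain k where k: "order G = p ^ k" using pk by blast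
  have k0: "k \<noteq> 0" using k assms by auto
  interpret A: group_action G "carrier G" "\<lambda>g. \<lambda>h\<in>carrier G. g \<otimes> h \<otimes> inv g"
    by (rule action_by_conjugation)
  define F where "F = {x \<in> carrier G. \<forall>g\<in>carrier G. (\<lambda>h\<in>carrier G. g \<otimes> h \<otimes> inv g) x = x}"
  have "card (carrier G) mod p = card F mod p"
    unfolding F_def by (rule A.fixed_points_mod[OF fin fin pp k])
  moreover have "card (carrier G) mod p = 0" using k k0 by (simp add: order_def)
  ultimately have c0: "card F mod p = 0" by simp
  have "\<one> \<in> F" unfolding F_def by simp
  moreover have "finite F" unfolding F_def using fin by simp
  ultimately obtain w where w: "w \<in> F" "w \<noteq> \<one>" using card_mod_other[OF _ _ c0 p_gt1] by blast
  have wc: "w \<in> carrier G" using w unfolding F_def by blast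
  have "w \<otimes> y = y \<otimes> w" if y: "y \<in> carrier G" for y
  proof -
    have "y \<otimes> w \<otimes> inv y = w" using w y unfolding F_def by auto
    then have "y \<otimes> w \<otimes> inv y \<otimes> y = w \<otimes> y" by simp
    then show ?thesis using y wc by (simp add: m_assoc)
  qed
  then show ?thesis using wc w by blast
qed

lemma norm_grow:
  assumes H: "subgroup H G" and ne: "H \<noteq> carrier G"
  shows "\<exists>g\<in>carrier G - H. \<forall>x\<in>H. inv g \<otimes> x \<otimes> g \<in> H"
proof -
  obtain k where k: "order G = p ^ k" using pk by blast
  interpret H: subgroup H G by (rule H)
  define G' where "G' = G\<lparr>carrier := H\<rparr>"
  have gG': "group G'" unfolding G'_def by (rule subgroup_imp_group[OF H])
  have finH: "finite H" using fin H.subset finite_subset by blast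
  have lag: "card (rcosets H) * card H = order G" by (rule lagrange[OF H])
  then have "card H dvd p ^ k" using k by (metis dvd_triv_right)
  then obtain j where j: "card H = p ^ j" using pp divides_primepow_nat by blast
  have "card H < order G"
  proof -
    have "card H \<le> order G" unfolding order_def using fin H.subset card_mono by blast
    moreover have "card H \<noteq> order G" unfolding order_def using fin H.subset ne card_subset_eq by blast
    ultimately show ?thesis by simp
  qed
  then have "j < k" using j k p_gt1 power_less_imp_less_exp by metis
  have "p ^ k = p ^ (k - j) * p ^ j" using \<open>j < k\<close> by (simp flip: power_add)
  then have "card (rcosets H) * p ^ j = p ^ (k - j) * p ^ j" using lag j k by simp
  then have ci: "card (rcosets H) = p ^ (k - j)" using p_gt1 by simp
  have ci0: "card (rcosets H) mod p = 0" using ci \<open>j < k\<close> by simp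
  define f where "f = (\<lambda>h Y. r_coset G Y (inv h))"
  have act: "group_action G' (rcosets H) (\<lambda>g. restrict (f g) (rcosets H))"
  proof (rule mk_action[OF gG'])
    fix g Yc assume g: "g \<in> carrier G'" and Yc: "Yc \<in> rcosets H"
    obtain a where a: "a \<in> carrier G" "Yc = H #> a" using Yc unfolding RCOSETS_def by blast
    have gc: "g \<in> carrier G" using g H.subset unfolding G'_def by auto
    have "f g Yc = H #> (a \<otimes> inv g)" unfolding f_def a(2) using a gc H.subset by (simp add: coset_mult_assoc)
    then show "f g Yc \<in> rcosets H" using a gc by (simp add: rcosetsI H.subset)
  next
    fix Yc assume Yc: "Yc \<in> rcosets H"
    have "Yc \<subseteq> carrier G" using H.rcosets_carrier[OF is_group Yc] .
    then show "f \<one>\<^bsub>G'\<^esub> Yc = Yc" unfolding f_def G'_def by simp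
  next
    fix g h Yc assume g: "g \<in> carrier G'" and h: "h \<in> carrier G'" and Yc: "Yc \<in> rcosets H"
    have gc: "g \<in> carrier G" and hc: "h \<in> carrier G" using g h H.subset unfolding G'_def by auto
    have Xc: "Yc \<subseteq> carrier G" using H.rcosets_carrier[OF is_group Yc] .
    show "f (g \<otimes>\<^bsub>G'\<^esub> h) Yc = f g (f h Yc)"
      unfolding f_def G'_def using gc hc Xc by (simp add: inv_mult_group coset_mult_assoc)
  qed
  have ordG': "order G' = p ^ j" unfolding G'_def order_def using j by simp
  have finG': "finite (carrier G')" unfolding G'_def using finH by simp
  have finR: "finite (rcosets H)"
  proof -
    have "rcosets H \<subseteq> Pow (carrier G)" using H.rcosets_carrier[OF is_group] by blast
    then show ?thesis using fin finite_subset by blast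
  qed
  define F where "F = {Yc \<in> rcosets H. \<forall>g\<in>carrier G'. restrict (f g) (rcosets H) Yc = Yc}"
  have "card (rcosets H) mod p = card F mod p"
    unfolding F_def by (rule group_action.fixed_points_mod[OF act finR finG' pp ordG'])
  then have cF: "card F mod p = 0" using ci0 by simp
  have HR: "H \<in> rcosets H" using H.subset by (metis coset_mult_one one_closed rcosetsI)
  have "H \<in> F" unfolding F_def G'_def f_def using HR
    by (simp add: H.rcos_const H.m_inv_closed)
  moreover have "finite F" using finR unfolding F_def by simp
  ultimately obtain Yc where Yc: "Yc \<in> F" "Yc \<noteq> H" using card_mod_other[OF _ _ cF p_gt1] by blast
  then obtain a where a: "a \<in> carrier G" "Yc = H #> a" unfolding F_def RCOSETS_def by blast
  have aH: "a \<notin> H" using a Yc(2) H.rcos_const by blast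
  have fixX: "Yc #> inv h = Yc" if h: "h \<in> H" for h
    using Yc(1) h unfolding F_def G'_def f_def by auto
  have conj: "a \<otimes> x \<otimes> inv a \<in> H" if x: "x \<in> H" for x
  proof -
    have xc: "x \<in> carrier G" using x H.subset by blast
    have "H #> (a \<otimes> x) = H #> a" using fixX[of "inv x"] x a xc H.subset
      by (simp add: coset_mult_assoc)
    then have "a \<otimes> x \<in> H #> a" using rcos_self[OF _ H] a xc by (metis m_closed)
    then obtain h where h: "h \<in> H" "a \<otimes> x = h \<otimes> a" unfolding r_coset_def by blast
    have "a \<otimes> x \<otimes> inv a = h" using h a xc H.subset by (simp add: m_assoc subsetD)
    then show ?thesis using h by simp
  qed
  have "inv a \<in> carrier G - H" using aH a by (metis DiffI H.m_inv_closed inv_closed inv_inv)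
  moreover have "\<forall>x\<in>H. inv (inv a) \<otimes> x \<otimes> inv a \<in> H" using conj a by simp
  ultimately show ?thesis by blast
qed

end

context group begin

lemma gen_self: "x \<in> carrier G \<Longrightarrow> x \<in> generate G {x}"
  by (simp add: generate.incl)

lemma gen_carrier: "x \<in> carrier G \<Longrightarrow> generate G {x} \<subseteq> carrier G"
  by (simp add: generate_incl)

lemma gen_sg: "x \<in> carrier G \<Longrightarrow> subgroup (generate G {x}) G"
  by (simp add: generate_is_subgroup)

lemma gen_pow_int: "x \<in> carrier G \<Longrightarrow> x [^] (i::int) \<in> generate G {x}"
  using generate_pow by blast

lemma gen_pow_nat: "x \<in> carrier G \<Longrightarrow> x [^] (n::nat) \<in> generate G {x}"
  using gen_pow_int[of x "int n"] by (simp add: int_pow_int)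

lemma gen_sub: "x \<in> carrier G \<Longrightarrow> y \<in> generate G {x} \<Longrightarrow> generate G {y} \<subseteq> generate G {x}"
  by (simp add: gen_sg generate_subgroup_incl)

lemma gen_elem_int: "x \<in> carrier G \<Longrightarrow> y \<in> generate G {x} \<Longrightarrow> \<exists>i::int. y = x [^] i"
  using generate_pow by blast

lemma card_gen: "x \<in> carrier G \<Longrightarrow> card (generate G {x}) = ord x"
  by (simp add: generate_pow_card)

lemma gen_eq_card:
  assumes fin: "finite (carrier G)" and x: "x \<in> carrier G" and y: "y \<in> carrier G"
    and sub: "generate G {y} \<subseteq> generate G {x}" and o: "ord y = ord x"
  shows "generate G {y} = generate G {x}"
proof -
  have "finite (generate G {x})" using fin gen_carrier[OF x] finite_subset by blast
  moreover have "card (generate G {y}) = card (generate G {x})" using card_gen x y o by simp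
  ultimately show ?thesis using sub card_subset_eq by blast
qed

lemma comm_inv: "x \<in> carrier G \<Longrightarrow> y \<in> carrier G \<Longrightarrow> x \<otimes> y = y \<otimes> x \<Longrightarrow> x \<otimes> inv y = inv y \<otimes> x"
proof -
  assume x: "x \<in> carrier G" and y: "y \<in> carrier G" and e: "x \<otimes> y = y \<otimes> x"
  have "y \<otimes> (x \<otimes> inv y) = (y \<otimes> x) \<otimes> inv y" using x y by (simp add: m_assoc)
  also have "\<dots> = (x \<otimes> y) \<otimes> inv y" using e by simp
  also have "\<dots> = x" using x y by (simp add: m_assoc)
  finally have 1: "y \<otimes> (x \<otimes> inv y) = x" .
  have 2: "y \<otimes> (inv y \<otimes> x) = x" using x y by (simp add: m_assoc[symmetric])
  from 1 2 have e2: "y \<otimes> (x \<otimes> inv y) = y \<otimes> (inv y \<otimes> x)" by simp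
  have c1: "x \<otimes> inv y \<in> carrier G" "inv y \<otimes> x \<in> carrier G" using x y by auto
  show ?thesis by (rule l_cancel[OF e2 c1 y])
qed

end

context pgrp begin

lemma ord_pp: "x \<in> carrier G \<Longrightarrow> \<exists>e. ord x = p ^ e"
proof -
  assume x: "x \<in> carrier G"
  obtain k where "order G = p ^ k" using pk by blast
  then have "ord x dvd p ^ k" using ord_dvd_group_order[OF x] by simp
  then show ?thesis using pp divides_primepow_nat by blast
qed

lemma ord_pos: "x \<in> carrier G \<Longrightarrow> ord x > 0"
  using ord_ge_1[OF fin] by fastforce

lemma elem_p:
  assumes x: "x \<in> carrier G" and x1: "x \<noteq> \<one>"
  shows "\<exists>y\<in>generate G {x}. ord y = p \<and> y = x [^] (ord x div p) \<and> p dvd ord x"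
proof -
  obtain e where e: "ord x = p ^ e" using ord_pp[OF x] by blast
  have "e \<noteq> 0"
  proof
    assume "e = 0"
    then have "ord x = 1" using e by simp
    then show False using x1 ord_eq_1[OF x] by simp
  qed
  then obtain e' where e': "e = Suc e'" by (cases e) auto
  have d: "p ^ e' dvd ord x" using e e' by simp
  have "ord (x [^] (p ^ e')) = ord x div p ^ e'" using ord_pow[OF x d] p_gt1 by simp
  also have "\<dots> = p" using e e' p_gt1 by simp
  finally have o: "ord (x [^] (p ^ e')) = p" .
  have "ord x div p = p ^ e'" using e e' p_gt1 by simp
  moreover have "p dvd ord x" using e e' by simp
  ultimately show ?thesis using o gen_pow_nat[OF x, of "p^e'"] by auto
qed

lemma ord_p_unique:
  assumes x: "x \<in> carrier G" and y: "y \<in> generate G {x}" and oy: "ord y = p"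
  shows "generate G {y} = generate G {x [^] (ord x div p)}"
proof -
  have yc: "y \<in> carrier G" using y gen_carrier[OF x] by blast
  have x1: "x \<noteq> \<one>" using y oy p_gt1 generate_one by auto
  obtain c where c: "c \<in> generate G {x}" "ord c = p" "c = x [^] (ord x div p)" "p dvd ord x"
    using elem_p[OF x x1] by blast
  obtain i :: int where i: "y = x [^] i" using gen_elem_int[OF x y] by blast
  have cc: "c \<in> carrier G" using c(1) gen_carrier[OF x] by blast
  have "y [^] p = \<one>" by (metis pow_ord_eq_1 yc oy)
  then have "(x [^] i) [^] (int p) = \<one>" using i by (simp add: int_pow_int)
  then have "x [^] (i * int p) = \<one>" using int_pow_pow[OF x] by simp
  then have "int (ord x) dvd i * int p" using int_pow_eq_id[OF x] by simp
  then obtain t where t: "i * int p = int (ord x) * t" by (metis dvd_def)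
  have "ord x = (ord x div p) * p" using c(4) by simp
  then have ox: "int (ord x) = int (ord x div p) * int p" by (metis of_nat_mult)
  have "i * int p = int (ord x div p) * t * int p" using t ox by (simp add: algebra_simps)
  then have it: "i = int (ord x div p) * t" using p_gt1 by simp
  have "c = x [^] (int (ord x div p))" by (simp add: c(3) int_pow_int)
  then have "c [^] t = x [^] (int (ord x div p) * t)" by (simp add: int_pow_pow x)
  then have "y = c [^] t" using i it by simp
  then have "y \<in> generate G {c}" using gen_pow_int[OF cc] by simp
  then have sub: "generate G {y} \<subseteq> generate G {c}" using gen_sub[OF cc] by blast
  show ?thesis using gen_eq_card[OF fin cc yc sub] oy c by simp
qed

end

locale pU = pgrp +
  fixes z
  assumes zc: "z \<in> carrier G" and zo: "ord z = p"
    and U: "\<And>y. y \<in> carrier G \<Longrightarrow> y [^] p = \<one> \<Longrightarrow> y \<in> generate G {z}"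
begin

lemma z_in:
  assumes x: "x \<in> carrier G" and x1: "x \<noteq> \<one>"
  shows "z \<in> generate G {x}"
proof -
  obtain y where y: "y \<in> generate G {x}" "ord y = p" using elem_p[OF x x1] by blast
  have yc: "y \<in> carrier G" using y gen_carrier[OF x] by blast
  have "y [^] p = \<one>" using pow_ord_eq_1[OF yc] y(2) by simp
  then have "y \<in> generate G {z}" using U[OF yc] by simp
  then have "generate G {y} = generate G {z}"
    using gen_eq_card[OF fin zc yc] gen_sub[OF zc] y zo by simp
  then have "z \<in> generate G {y}" using gen_self[OF zc] by simp
  then show ?thesis using gen_sub[OF x y(1)] by blast
qed

lemma gen_z_sub: "x \<in> carrier G \<Longrightarrow> x \<noteq> \<one> \<Longrightarrow> generate G {z} \<subseteq> generate G {x}"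
  using z_in gen_sub by blast

lemma lemmaC:
  assumes "x \<in> carrier G" "y \<in> carrier G" "x \<otimes> y = y \<otimes> x" "ord y \<le> ord x"
  shows "y \<in> generate G {x}"
  using assms
proof (induction "ord y" arbitrary: y rule: less_induct)
  case less
  note y = less.prems(2) and x = less.prems(1) and cm = less.prems(3) and le = less.prems(4)
  show ?case
  proof (cases "y = \<one>")
    case True
    then show ?thesis using gen_sg[OF x] subgroup.one_closed by blast
  next
    case False
    obtain c where c: "ord c = p" "c = y [^] (ord y div p)" "p dvd ord y" using elem_p[OF y False] by blast
    have x1: "x \<noteq> \<one>"
    proof
      assume "x = \<one>"
      then have "ord y \<le> 1" using le by simp
      then have "ord y = 1" using ord_pos[OF y] by simp
      then show False using False ord_eq_1[OF y] by simp
    qed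
    define y' where "y' = y [^] p"
    have y'c: "y' \<in> carrier G" using y by (simp add: y'_def)
    have oy': "ord y' = ord y div p" unfolding y'_def using ord_pow[OF y c(3)] p_gt1 by simp
    have lt: "ord y' < ord y" using oy' ord_pos[OF y] p_gt1 by simp
    have cm': "x \<otimes> y' = y' \<otimes> x" unfolding y'_def by (rule group_commutes_pow[OF cm[symmetric] y x, symmetric])
    have "y' \<in> generate G {x}" using less.hyps[OF lt x y'c cm'] lt le by simp
    then have "y' \<in> {x [^] k | k. k \<in> (UNIV :: nat set)}"
      using generate_pow_nat[OF x] ord_pos[OF x] by simp
    then obtain t :: nat where t: "y' = x [^] t" by blast
    have pt: "p dvd t"
    proof (rule ccontr)
      assume npt: "\<not> p dvd t"
      then have t0: "t \<noteq> 0" by (intro notI) simp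
      obtain e where e: "ord x = p ^ e" using ord_pp[OF x] by blast
      have "coprime p t" using npt pp prime_imp_coprime by blast
      then have "coprime (ord x) t" using e by simp
      then have "ord (x [^] t) = ord x" using ord_pow_gen[OF x] t0 by simp
      then show False using t lt le by simp
    qed
    then obtain t' where t': "t = p * t'" by blast
    define w where "w = y \<otimes> inv (x [^] t')"
    have xt: "x [^] t' \<in> carrier G" using x by simp
    have cmt: "y \<otimes> x [^] t' = x [^] t' \<otimes> y" by (rule group_commutes_pow[OF cm x y, symmetric])
    have cmi: "y \<otimes> inv (x [^] t') = inv (x [^] t') \<otimes> y" using comm_inv[OF y xt cmt] .
    have wc: "w \<in> carrier G" unfolding w_def using y xt by simp
    have "w [^] p = y [^] p \<otimes> (inv (x [^] t')) [^] p"
      unfolding w_def using pow_mult_distrib[OF cmi y] xt by simp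
    also have "\<dots> = y' \<otimes> inv (x [^] t)" unfolding y'_def using x t'
      by (simp add: nat_pow_inv nat_pow_pow mult.commute[of p t'])
    also have "\<dots> = \<one>" using t x by simp
    finally have "w \<in> generate G {z}" using U[OF wc] by simp
    then have wx: "w \<in> generate G {x}" using gen_z_sub[OF x x1] by blast
    have "y = w \<otimes> x [^] t'" unfolding w_def using y xt by (simp add: m_assoc)
    moreover have "x [^] t' \<in> generate G {x}" using gen_pow_nat[OF x] .
    ultimately show ?thesis using wx subgroup.m_closed[OF gen_sg[OF x]] by simp
  qed
qed

end

lemma geom_shift: "(\<Sum>i<Suc n. (r::int) ^ i) = 1 + r * (\<Sum>i<n. r ^ i)"
  unfolding sum.lessThan_Suc_shift by (simp add: sum_distrib_left)

context group begin

lemma cancel_l1 [simp]: "g \<in> carrier G \<Longrightarrow> y \<in> carrier G \<Longrightarrow> g \<otimes> (inv g \<otimes> y) = y"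
  by (simp add: m_assoc[symmetric])

lemma cancel_l2 [simp]: "g \<in> carrier G \<Longrightarrow> y \<in> carrier G \<Longrightarrow> inv g \<otimes> (g \<otimes> y) = y"
  by (simp add: m_assoc[symmetric])

lemma conj_pow_nat:
  assumes g: "g \<in> carrier G" and x: "x \<in> carrier G"
  shows "(inv g \<otimes> x \<otimes> g) [^] (n::nat) = inv g \<otimes> x [^] n \<otimes> g"
proof (induction n)
  case 0 then show ?case using g by simp
next
  case (Suc n)
  have "(inv g \<otimes> x \<otimes> g) [^] Suc n = (inv g \<otimes> x [^] n \<otimes> g) \<otimes> (inv g \<otimes> x \<otimes> g)"
    using Suc by simp
  also have "\<dots> = inv g \<otimes> (x [^] n \<otimes> (g \<otimes> inv g) \<otimes> x) \<otimes> g" using g x by (simp add: m_assoc)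
  also have "\<dots> = inv g \<otimes> x [^] Suc n \<otimes> g" using g x by (simp add: m_assoc)
  finally show ?case .
qed

lemma conj_pow_int:
  assumes g: "g \<in> carrier G" and x: "x \<in> carrier G"
  shows "(inv g \<otimes> x \<otimes> g) [^] (i::int) = inv g \<otimes> x [^] i \<otimes> g"
proof (cases "i \<ge> 0")
  case True
  then obtain n where "i = int n" by (metis nonneg_eq_int)
  then show ?thesis using conj_pow_nat[OF g x, of n] by (simp add: int_pow_int)
next
  case False
  then have "- i \<ge> 0" by simp
  then obtain n where "- i = int n" using nonneg_eq_int by blast
  then have n: "i = - int n" by simp
  have "(inv g \<otimes> x \<otimes> g) [^] i = inv ((inv g \<otimes> x \<otimes> g) [^] n)" using n g x by (simp add: int_pow_neg_int)
  also have "\<dots> = inv (inv g \<otimes> x [^] n \<otimes> g)" using conj_pow_nat[OF g x] by simp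
  also have "\<dots> = inv g \<otimes> inv (x [^] n) \<otimes> g" using g x by (simp add: inv_mult_group m_assoc)
  also have "\<dots> = inv g \<otimes> x [^] i \<otimes> g" using n x by (simp add: int_pow_neg_int)
  finally show ?thesis .
qed

lemma conj_iter:
  assumes g: "g \<in> carrier G" and a: "a \<in> carrier G" and r: "inv g \<otimes> a \<otimes> g = a [^] (r::int)"
  shows "inv (g [^] (n::nat)) \<otimes> a \<otimes> g [^] n = a [^] (r ^ n)"
proof (induction n)
  case 0 then show ?case using a by simp
next
  case (Suc n)
  have gn: "g [^] n \<in> carrier G" using g by simp
  have "inv (g [^] Suc n) \<otimes> a \<otimes> g [^] Suc n = inv g \<otimes> (inv (g [^] n) \<otimes> a \<otimes> g [^] n) \<otimes> g"
    using g gn a by (simp add: inv_mult_group m_assoc)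
  also have "\<dots> = inv g \<otimes> a [^] (r ^ n) \<otimes> g" using Suc by simp
  also have "\<dots> = (inv g \<otimes> a \<otimes> g) [^] (r ^ n)" using conj_pow_int[OF g a] by simp
  also have "\<dots> = a [^] (r * r ^ n)" using r a by (simp add: int_pow_pow)
  finally show ?case by simp
qed

lemma prod_pow:
  assumes g: "g \<in> carrier G" and a: "a \<in> carrier G" and r: "inv g \<otimes> a \<otimes> g = a [^] (r::int)"
  shows "(g \<otimes> a [^] (j::int)) [^] (n::nat) = g [^] n \<otimes> a [^] (j * (\<Sum>i<n. r ^ i))"
proof (induction n)
  case 0 then show ?case using a by simp
next
  case (Suc n)
  define S where "S = (\<Sum>i<n. r ^ i)"
  have swap: "a [^] (k::int) \<otimes> g = g \<otimes> a [^] (r * k)" for k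
  proof -
    have "g \<otimes> a [^] (r * k) = g \<otimes> (inv g \<otimes> a [^] k \<otimes> g)"
      using conj_pow_int[OF g a, of k] r a by (simp add: int_pow_pow)
    also have "\<dots> = a [^] k \<otimes> g" using g a by (simp add: m_assoc[symmetric])
    finally show ?thesis by simp
  qed
  have "(g \<otimes> a [^] j) [^] Suc n = g [^] n \<otimes> (a [^] (j * S) \<otimes> g) \<otimes> a [^] j"
    using Suc g a by (simp add: S_def m_assoc)
  also have "\<dots> = g [^] n \<otimes> g \<otimes> (a [^] (r * (j * S)) \<otimes> a [^] j)" using swap g a by (simp add: m_assoc)
  also have "\<dots> = g [^] Suc n \<otimes> a [^] (r * (j * S) + j)" using g a by (simp add: int_pow_mult)
  also have "r * (j * S) + j = j * (\<Sum>i<Suc n. r ^ i)"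
    unfolding geom_shift S_def by (simp add: algebra_simps)
  finally show ?case .
qed

end

context pU begin

lemma ANA:
  assumes a: "a \<in> carrier G" and amax: "\<And>y. y \<in> carrier G \<Longrightarrow> ord y \<le> ord a" and a1: "a \<noteq> \<one>"
    and g: "g \<in> carrier G" and gA: "g \<notin> generate G {a}"
    and r: "inv g \<otimes> a \<otimes> g = a [^] (r::int)"
    and s: "g [^] p = a [^] (s::int)"
  shows "p = 2 \<and> (\<exists>m\<ge>2. ord a = 2 ^ m \<and> inv g \<otimes> a \<otimes> g = inv a \<and> g [^] (2::nat) = a [^] ((2::nat) ^ (m - 1)))"
proof -
  obtain m where m: "ord a = p ^ m" using ord_pp[OF a] by blast
  have m1: "m \<ge> 1"
  proof (rule ccontr)
    assume "\<not> m \<ge> 1"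
    then have "ord a = 1" using m by simp
    then show False using a1 ord_eq_1[OF a] by simp
  qed
  have oam: "int (ord a) = int p ^ m" using m by simp
  have gp: "g [^] p \<in> carrier G" using g by simp
  have "inv (g [^] p) \<otimes> a \<otimes> g [^] p = a"
  proof -
    have "a \<otimes> a [^] s = a [^] (1 + s)" using a by (simp add: int_pow_mult)
    moreover have "a [^] s \<otimes> a = a [^] (s + 1)" using a by (simp add: int_pow_mult)
    ultimately have cm: "a \<otimes> g [^] p = g [^] p \<otimes> a" using s by (simp add: add.commute)
    have "inv (g [^] p) \<otimes> a \<otimes> g [^] p = inv (g [^] p) \<otimes> (a \<otimes> g [^] p)" using a gp by (simp add: m_assoc)
    also have "\<dots> = inv (g [^] p) \<otimes> (g [^] p \<otimes> a)" using cm by simp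
    also have "\<dots> = a" using a gp by simp
    finally show ?thesis .
  qed
  then have "a [^] (r ^ p) = a [^] (1::int)" using conj_iter[OF g a r, of p] a by simp
  then have "int p ^ m dvd 1 - r ^ p" using int_pow_eq[OF a, of "r ^ p" 1] oam by simp
  then have h1: "int p ^ m dvd r ^ p - 1" using dvd_diff_commute by blast
  have h2: "\<not> int p ^ m dvd r - 1"
  proof
    assume "int p ^ m dvd r - 1"
    then have "int p ^ m dvd 1 - r" using dvd_diff_commute by blast
    then have "a [^] r = a [^] (1::int)" using int_pow_eq[OF a, of r 1] oam by simp
    then have "inv g \<otimes> a \<otimes> g = a" using r a by simp
    moreover have "g \<otimes> (inv g \<otimes> a \<otimes> g) = a \<otimes> g" using a g by (simp add: m_assoc)
    ultimately have "a \<otimes> g = g \<otimes> a" by simp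
    then have "g \<in> generate G {a}" using lemmaC[OF a g] amax[OF g] by simp
    then show False using gA by simp
  qed
  have "inv g \<otimes> a [^] s \<otimes> g = a [^] s"
  proof -
    have "g [^] p \<otimes> g = g \<otimes> g [^] p" using nat_pow_Suc2[OF g, of p] by simp
    then have "inv g \<otimes> g [^] p \<otimes> g = g [^] p" using g by (simp add: m_assoc)
    then show ?thesis using s by simp
  qed
  moreover have "inv g \<otimes> a [^] s \<otimes> g = a [^] (r * s)"
    using conj_pow_int[OF g a, of s] r a by (simp add: int_pow_pow)
  ultimately have "a [^] (r * s) = a [^] s" by simp
  then have "int p ^ m dvd s - r * s" using int_pow_eq[OF a] oam by simp
  then have "int p ^ m dvd r * s - s" using dvd_diff_commute by blast
  moreover have "r * s - s = s * (r - 1)" by (simp add: algebra_simps)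
  ultimately have h3: "int p ^ m dvd s * (r - 1)" by simp
  have h4: "\<forall>j. \<not> int p ^ m dvd s + j * (\<Sum>i<p. r^i)"
  proof (intro allI notI)
    fix j assume dv: "int p ^ m dvd s + j * (\<Sum>i<p. r^i)"
    define w where "w = g \<otimes> a [^] j"
    have wc: "w \<in> carrier G" unfolding w_def using g a by simp
    have "w [^] p = g [^] p \<otimes> a [^] (j * (\<Sum>i<p. r ^ i))" unfolding w_def by (rule prod_pow[OF g a r])
    also have "\<dots> = a [^] (s + j * (\<Sum>i<p. r ^ i))" using s a by (simp add: int_pow_mult)
    also have "\<dots> = \<one>" using dv int_pow_eq_id[OF a] oam by simp
    finally have "w \<in> generate G {z}" using U[OF wc] by simp
    then have wA: "w \<in> generate G {a}" using gen_z_sub[OF a a1] by blast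
    have "g = w \<otimes> inv (a [^] j)" unfolding w_def using g a by (simp add: m_assoc)
    moreover have "inv (a [^] j) \<in> generate G {a}"
      using gen_pow_int[OF a, of "-j"] a by (simp add: int_pow_neg)
    ultimately have "g \<in> generate G {a}" using wA subgroup.m_closed[OF gen_sg[OF a]] by simp
    then show False using gA by simp
  qed
  have NT: "p = 2 \<and> m \<ge> 2 \<and> 2 ^ m dvd r + 1 \<and> 2 ^ m dvd s - 2 ^ (m - 1)"
    by (rule NT_main[OF pp m1 h1 h2 h3 h4])
  then have p2: "p = 2" and m2: "m \<ge> 2" by auto
  have oa: "int (ord a) = 2 ^ m" using oam p2 by simp
  have "(2::int) ^ m dvd r + 1" using NT by simp
  then have "(2::int) ^ m dvd - (r + 1)" by (simp only: dvd_minus_iff)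
  then have "int (ord a) dvd -1 - r" using oa by (simp add: algebra_simps)
  then have "a [^] r = a [^] (-1::int)" using int_pow_eq[OF a, of r "-1"] by simp
  then have c1: "inv g \<otimes> a \<otimes> g = inv a" using r a by (simp add: int_pow_neg)
  have "int (ord a) dvd s - 2 ^ (m - 1)" using oa NT by simp
  then have "int (ord a) dvd 2 ^ (m - 1) - s" using dvd_diff_commute by blast
  then have "int (ord a) dvd int (2 ^ (m - 1)) - s" by simp
  then have "a [^] s = a [^] (int (2 ^ (m - 1)))" using int_pow_eq[OF a, of s "int (2 ^ (m - 1))"] by simp
  moreover have "a [^] (int (2 ^ (m - 1))) = a [^] ((2::nat) ^ (m - 1))" by (rule int_pow_int)
  ultimately have "a [^] s = a [^] ((2::nat) ^ (m - 1))" by simp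
  moreover have "g [^] (2::nat) = a [^] s" using s p2 by simp
  ultimately have c2: "g [^] (2::nat) = a [^] ((2::nat) ^ (m - 1))" by simp
  show ?thesis using p2 m2 m c1 c2 by auto
qed

end

locale qgrp = group G for G (structure) + fixes a g and h :: nat
  assumes ac: "a \<in> carrier G" and gc: "g \<in> carrier G" and conj: "inv g \<otimes> a \<otimes> g = inv a"
    and g2: "g [^] (2::nat) = a [^] h" and ah: "a [^] (2 * h) = \<one>"
begin

definition Q where "Q = {a [^] (i::int) | i. True} \<union> {a [^] (i::int) \<otimes> g | i. True}"

lemma ai [simp]: "a [^] (i::int) \<in> carrier G" using ac by simp

lemma gg: "g \<otimes> g = a [^] (int h)" using g2 gc by (simp add: numeral_2_eq_2 int_pow_int)

lemma a2h: "a [^] (2 * int h) = \<one>" using ah by (metis int_pow_int of_nat_mult of_nat_numeral)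

lemma swap: "g \<otimes> a [^] (i::int) = a [^] (- i) \<otimes> g"
proof -
  have "inv g \<otimes> a [^] (- i) \<otimes> g = (inv g \<otimes> a \<otimes> g) [^] (- i)" using conj_pow_int[OF gc ac] by simp
  also have "\<dots> = a [^] i" using conj ac by (simp add: int_pow_inv int_pow_neg)
  finally have e: "inv g \<otimes> a [^] (- i) \<otimes> g = a [^] i" .
  have "g \<otimes> a [^] i = g \<otimes> (inv g \<otimes> a [^] (- i) \<otimes> g)" using e by simp
  also have "\<dots> = a [^] (- i) \<otimes> g" using gc ac by (simp add: m_assoc)
  finally show ?thesis .
qed

lemma Q_mem: "x \<in> Q \<longleftrightarrow> (\<exists>i. x = a [^] (i::int)) \<or> (\<exists>i. x = a [^] (i::int) \<otimes> g)"
  unfolding Q_def by blast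

lemma Q_sub: "subgroup Q G"
proof (rule subgroupI)
  show "Q \<subseteq> carrier G" unfolding Q_def using gc by auto
  show "Q \<noteq> {}" unfolding Q_def by blast
next
  fix x assume "x \<in> Q"
  then consider i where "x = a [^] (i::int)" | i where "x = a [^] (i::int) \<otimes> g" using Q_mem by blast
  then show "inv x \<in> Q"
  proof cases
    case 1
    then have "inv x = a [^] (- i)" using ac by (simp add: int_pow_neg)
    then show ?thesis using Q_mem by blast
  next
    case 2
    have "(a [^] (i + int h) \<otimes> g) \<otimes> x = a [^] (i + int h) \<otimes> (g \<otimes> a [^] i) \<otimes> g"
      using 2 gc by (simp add: m_assoc)
    also have "\<dots> = a [^] (i + int h) \<otimes> a [^] (- i) \<otimes> (g \<otimes> g)"
      using gc by (simp add: swap m_assoc)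
    also have "\<dots> = a [^] (i + int h) \<otimes> a [^] (- i) \<otimes> a [^] (int h)" using gg by simp
    also have "\<dots> = a [^] ((i + int h) + (- i) + int h)" by (simp only: int_pow_mult[OF ac, symmetric])
    also have "(i + int h) + (- i) + int h = 2 * int h" by simp
    also have "a [^] (2 * int h) = \<one>" by (rule a2h)
    finally have "inv x = a [^] (i + int h) \<otimes> g" using 2 gc by (intro inv_equality) auto
    then show ?thesis using Q_mem by blast
  qed
next
  fix x y assume "x \<in> Q" "y \<in> Q"
  then consider i j where "x = a [^] (i::int)" "y = a [^] (j::int)"
    | i j where "x = a [^] (i::int)" "y = a [^] (j::int) \<otimes> g"
    | i j where "x = a [^] (i::int) \<otimes> g" "y = a [^] (j::int)"
    | i j where "x = a [^] (i::int) \<otimes> g" "y = a [^] (j::int) \<otimes> g"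
    using Q_mem by metis
  then show "x \<otimes> y \<in> Q"
  proof cases
    case 1
    then have "x \<otimes> y = a [^] (i + j)" using ac by (simp add: int_pow_mult)
    then show ?thesis using Q_mem by blast
  next
    case 2
    then have "x \<otimes> y = a [^] (i + j) \<otimes> g" using ac gc by (simp add: int_pow_mult m_assoc)
    then show ?thesis using Q_mem by blast
  next
    case 3
    then have "x \<otimes> y = a [^] i \<otimes> (g \<otimes> a [^] j)" using gc by (simp add: m_assoc)
    also have "\<dots> = a [^] i \<otimes> a [^] (- j) \<otimes> g" using gc by (simp add: swap m_assoc)
    also have "\<dots> = a [^] (i + - j) \<otimes> g" by (simp only: int_pow_mult[OF ac, symmetric])
    finally show ?thesis using Q_mem by blast
  next
    case 4
    then have "x \<otimes> y = a [^] i \<otimes> (g \<otimes> a [^] j) \<otimes> g" using gc by (simp add: m_assoc)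
    also have "\<dots> = a [^] i \<otimes> a [^] (- j) \<otimes> (g \<otimes> g)" using gc by (simp add: swap m_assoc)
    also have "\<dots> = a [^] i \<otimes> a [^] (- j) \<otimes> a [^] (int h)" using gg by simp
    also have "\<dots> = a [^] (i + - j + int h)" by (simp only: int_pow_mult[OF ac, symmetric])
    finally show ?thesis using Q_mem by blast
  qed
qed

lemma Q_carrier: "Q \<subseteq> carrier G" using Q_sub subgroup.subset by blast

lemma sq: "(a [^] (i::int) \<otimes> g) \<otimes> (a [^] i \<otimes> g) = a [^] (int h)"
proof -
  have "(a [^] i \<otimes> g) \<otimes> (a [^] i \<otimes> g) = a [^] i \<otimes> (g \<otimes> a [^] i) \<otimes> g" using gc by (simp add: m_assoc)
  also have "\<dots> = a [^] i \<otimes> a [^] (- i) \<otimes> (g \<otimes> g)" using gc by (simp add: swap m_assoc)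
  also have "\<dots> = a [^] (int h)" using ac gg by (simp add: int_pow_mult[symmetric])
  finally show ?thesis .
qed

lemma Q_gen: "generate G {a, g} = Q"
proof
  show "generate G {a, g} \<subseteq> Q"
  proof (rule generate_subgroup_incl[OF _ Q_sub])
    have "a = a [^] (1::int)" using ac by simp
    moreover have "g = a [^] (0::int) \<otimes> g" using gc by simp
    ultimately show "{a, g} \<subseteq> Q" using Q_mem by blast
  qed
  show "Q \<subseteq> generate G {a, g}"
  proof
    fix x assume "x \<in> Q"
    have sg: "subgroup (generate G {a, g}) G" using ac gc by (intro generate_is_subgroup) auto
    have aa: "a \<in> generate G {a, g}" and ga: "g \<in> generate G {a, g}" by (auto intro: generate.incl)
    have "a [^] (i::int) \<in> generate G {a, g}" for i using subgroup_int_pow_closed[OF sg aa] .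
    then show "x \<in> generate G {a, g}" using \<open>x \<in> Q\<close> Q_mem subgroup.m_closed[OF sg] ga by metis
  qed
qed

lemma Q_split: "Q = generate G {a} \<union> (\<lambda>x. x \<otimes> g) ` generate G {a}"
  unfolding Q_def generate_pow[OF ac] by blast

lemma card_Q_le:
  assumes fin: "finite (carrier G)"
  shows "card Q \<le> 2 * ord a"
proof -
  have fA: "finite (generate G {a})" using fin gen_carrier[OF ac] finite_subset by blast
  have "card Q \<le> card (generate G {a}) + card ((\<lambda>x. x \<otimes> g) ` generate G {a})"
    unfolding Q_split by (rule card_Un_le)
  also have "\<dots> \<le> card (generate G {a}) + card (generate G {a})" using card_image_le[OF fA] by simp
  finally show ?thesis using card_gen[OF ac] by simp
qed

lemma card_Q_eq:
  assumes fin: "finite (carrier G)" and gA: "g \<notin> generate G {a}"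
  shows "card Q = 2 * ord a"
proof -
  have fA: "finite (generate G {a})" using fin gen_carrier[OF ac] finite_subset by blast
  have inj: "inj_on (\<lambda>x. x \<otimes> g) (generate G {a})"
    using gen_carrier[OF ac] gc by (intro inj_onI) (metis subsetD r_cancel)
  have disj: "generate G {a} \<inter> (\<lambda>x. x \<otimes> g) ` generate G {a} = {}"
  proof (rule ccontr)
    assume "\<not> ?thesis"
    then obtain x where x: "x \<in> generate G {a}" "x \<otimes> g \<in> generate G {a}" by blast
    have xc: "x \<in> carrier G" using x gen_carrier[OF ac] by blast
    have "g = inv x \<otimes> (x \<otimes> g)" using xc gc by simp
    moreover have "inv x \<in> generate G {a}" using x subgroup.m_inv_closed[OF gen_sg[OF ac]] by blast
    ultimately have "g \<in> generate G {a}" using x subgroup.m_closed[OF gen_sg[OF ac]] by metis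
    then show False using gA by simp
  qed
  have "card Q = card (generate G {a}) + card ((\<lambda>x. x \<otimes> g) ` generate G {a})"
    unfolding Q_split using fA disj by (simp add: card_Un_disjoint)
  also have "\<dots> = 2 * ord a" using card_image[OF inj] card_gen[OF ac] by simp
  finally show ?thesis .
qed

end

lemma not4: "\<not> (4::int) dvd r ^ 2 + 1"
proof
  assume d: "4 dvd r ^ 2 + 1"
  show False
  proof (cases "even r")
    case True
    then obtain t where "r = 2 * t" by blast
    then have "r ^ 2 + 1 = 4 * t ^ 2 + 1" by (simp add: power2_eq_square)
    then have "(4::int) dvd 1" using d by (metis dvd_add_right_iff dvd_triv_left)
    then show False by simp
  next
    case False
    then obtain t where "r = 2 * t + 1" by (metis oddE)
    then have "r ^ 2 + 1 = 4 * (t ^ 2 + t) + 2" by (simp add: power2_eq_square algebra_simps)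
    then have "(4::int) dvd 2" using d by (metis dvd_add_right_iff dvd_triv_left)
    then show False by simp
  qed
qed

context pU begin

lemma z_ne1: "z \<noteq> \<one>" using zo p_gt1 ord_eq_1[OF zc] by auto

lemma exists_max: "\<exists>a\<in>carrier G. \<forall>y\<in>carrier G. ord y \<le> ord a"
proof -
  have fi: "finite (ord ` carrier G)" using fin by simp
  have ne: "ord ` carrier G \<noteq> {}" by auto
  obtain a where a: "a \<in> carrier G" "ord a = Max (ord ` carrier G)" using Max_in[OF fi ne] by auto
  have "\<forall>y\<in>carrier G. ord y \<le> ord a" using a(2) Max_ge[OF fi] by simp
  then show ?thesis using a(1) by blast
qed

end

locale cls = pU +
  fixes a g m
  assumes ac: "a \<in> carrier G" and amax: "\<And>y. y \<in> carrier G \<Longrightarrow> ord y \<le> ord a"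
    and a1: "a \<noteq> \<one>" and p2: "p = 2" and m2: "m \<ge> 2" and oa: "ord a = 2 ^ m"
    and gc: "g \<in> carrier G" and gA: "g \<notin> generate G {a}"
    and cj: "inv g \<otimes> a \<otimes> g = inv a" and gsq: "g [^] (2::nat) = a [^] ((2::nat) ^ (m - 1))"

sublocale cls \<subseteq> qgrp G a g "2 ^ (m - 1)"
proof
  show "a \<in> carrier G" by (rule ac)
  show "g \<in> carrier G" by (rule gc)
  show "inv g \<otimes> a \<otimes> g = inv a" by (rule cj)
  show "g [^] (2::nat) = a [^] ((2::nat) ^ (m - 1))" by (rule gsq)
  have "(2 * 2 ^ (m - 1) :: nat) = ord a" using oa m2 by (cases m) auto
  then show "a [^] (2 * 2 ^ (m - 1) :: nat) = \<one>" using ac by simp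
qed

context cls begin

lemma A_Q: "generate G {a} \<subseteq> Q" using Q_split by blast

lemma gQ: "g \<in> Q" using Q_mem gc by (metis int_pow_0 l_one)

lemma zA: "generate G {z} \<subseteq> generate G {a}" using gen_z_sub[OF ac a1] .

lemma in_A_pow: "x \<in> generate G {a} \<Longrightarrow> \<exists>i::int. x = a [^] i" using gen_elem_int[OF ac] by blast

lemma NA:
  assumes "k \<in> carrier G" "inv k \<otimes> a \<otimes> k \<in> generate G {a}"
  shows "k \<in> Q"
  using assms
proof (induction "ord k" arbitrary: k rule: less_induct)
  case less
  note kc = less.prems(1) and kn = less.prems(2)
  show ?case
  proof (cases "k \<in> generate G {a}")
    case True
    then show ?thesis using A_Q by blast
  next
    case False
    have k1: "k \<noteq> \<one>" using False gen_sg[OF ac] subgroup.one_closed by blast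
    obtain r :: int where r: "inv k \<otimes> a \<otimes> k = a [^] r" using in_A_pow[OF kn] by blast
    define k2 where "k2 = k [^] (2::nat)"
    have k2c: "k2 \<in> carrier G" unfolding k2_def using kc by simp
    have "inv k2 \<otimes> a \<otimes> k2 = a [^] (r ^ 2)" unfolding k2_def by (rule conj_iter[OF kc ac r])
    then have k2n: "inv k2 \<otimes> a \<otimes> k2 \<in> generate G {a}" using gen_pow_int[OF ac] by simp
    obtain c where c: "p dvd ord k" using elem_p[OF kc k1] by blast
    have "ord k2 = ord k div 2" unfolding k2_def using ord_pow[OF kc] c p2 by simp
    then have lt: "ord k2 < ord k" using ord_pos[OF kc] by simp
    have "k2 \<in> Q" by (rule less.hyps[OF lt k2c k2n])
    then consider i where "k2 = a [^] (i::int)" | i where "k2 = a [^] (i::int) \<otimes> g" using Q_mem by blast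
    then show ?thesis
    proof cases
      case 1
      have "k [^] p = a [^] i" using 1 p2 unfolding k2_def by simp
      then have "inv k \<otimes> a \<otimes> k = inv a" using ANA[OF ac amax a1 kc False r] by blast
      define u where "u = g \<otimes> k"
      have uc: "u \<in> carrier G" unfolding u_def using gc kc by simp
      have "inv u \<otimes> a \<otimes> u = inv k \<otimes> (inv g \<otimes> a \<otimes> g) \<otimes> k"
        unfolding u_def using gc kc ac by (simp add: inv_mult_group m_assoc)
      also have "\<dots> = inv k \<otimes> inv a \<otimes> k" using cj by simp
      also have "\<dots> = inv (inv k \<otimes> a \<otimes> k)" using kc ac by (simp add: inv_mult_group m_assoc)
      also have "\<dots> = a" using \<open>inv k \<otimes> a \<otimes> k = inv a\<close> ac by simp
      finally have e: "inv u \<otimes> a \<otimes> u = a" .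
      have "u \<otimes> (inv u \<otimes> a \<otimes> u) = a \<otimes> u" using uc ac by (simp add: m_assoc)
      then have "a \<otimes> u = u \<otimes> a" using e by simp
      then have "u \<in> generate G {a}" using lemmaC[OF ac uc _ amax[OF uc]] by simp
      then have uQ: "u \<in> Q" using A_Q by blast
      have "k = inv g \<otimes> u" unfolding u_def using gc kc by simp
      moreover have "inv g \<in> Q" using gQ subgroup.m_inv_closed[OF Q_sub] by blast
      ultimately show ?thesis using uQ subgroup.m_closed[OF Q_sub] by simp
    next
      case 2
      have ai: "a [^] i \<in> carrier G" using ac by simp
      have cm: "a [^] i \<otimes> a = a \<otimes> a [^] i"
      proof -
        have "a [^] i \<otimes> a = a [^] (i + 1)" using ac by (simp add: int_pow_mult)
        also have "\<dots> = a [^] (1 + i)" by (simp add: add.commute)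
        also have "\<dots> = a \<otimes> a [^] i" using ac by (simp add: int_pow_mult)
        finally show ?thesis .
      qed
      have "inv k2 \<otimes> a \<otimes> k2 = inv g \<otimes> (inv (a [^] i) \<otimes> (a \<otimes> a [^] i)) \<otimes> g"
        using 2 gc ai ac by (simp add: inv_mult_group m_assoc)
      also have "\<dots> = inv g \<otimes> a \<otimes> g" using cm[symmetric] ai ac by (simp add: m_assoc[symmetric])
      also have "\<dots> = inv a" by (rule cj)
      finally have "a [^] (r ^ 2) = a [^] (-1::int)"
        using \<open>inv k2 \<otimes> a \<otimes> k2 = a [^] (r ^ 2)\<close> ac by (simp add: int_pow_neg)
      then have d: "int (ord a) dvd -1 - r ^ 2" using int_pow_eq[OF ac] by simp
      have "(2::nat) ^ m = 4 * 2 ^ (m - 2)" using m2 by (cases m; cases "m - 1") auto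
      then have "int (ord a) = 4 * 2 ^ (m - 2)" using oa by simp
      then have "(4::int) dvd int (ord a)" by simp
      then have "(4::int) dvd -1 - r ^ 2" using d dvd_trans by blast
      then have "(4::int) dvd - (r ^ 2 + 1)" by (simp add: algebra_simps)
      then have "(4::int) dvd r ^ 2 + 1" by (simp only: dvd_minus_iff)
      then show ?thesis using not4 by blast
    qed
  qed
qed

end


context cls begin

lemma Q_all_3:
  assumes m3: "m \<ge> 3"
  shows "Q = carrier G"
proof (rule ccontr)
  assume ne: "Q \<noteq> carrier G"
  obtain h where h: "h \<in> carrier G - Q" and hn: "\<forall>x\<in>Q. inv h \<otimes> x \<otimes> h \<in> Q"
    using norm_grow[OF Q_sub ne] by blast
  have hc: "h \<in> carrier G" using h by blast
  have aQ: "a \<in> Q" using A_Q gen_self[OF ac] by blast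
  define c where "c = inv h \<otimes> a \<otimes> h"
  have cQ: "c \<in> Q" unfolding c_def using hn aQ by blast
  have "c \<in> generate G {a}"
  proof (rule ccontr)
    assume "c \<notin> generate G {a}"
    then obtain i where ci: "c = a [^] (i::int) \<otimes> g" using cQ Q_mem generate_pow[OF ac] by blast
    have cc: "c \<otimes> c = a [^] (int (2 ^ (m - 1)))" unfolding ci by (rule sq)
    have "c [^] (4::nat) = (c \<otimes> c) \<otimes> (c \<otimes> c)"
      using hc ac unfolding c_def by (simp add: numeral_eq_Suc m_assoc)
    also have "\<dots> = a [^] (int (2 ^ (m - 1)) + int (2 ^ (m - 1)))" unfolding cc by (rule int_pow_mult[OF ac, symmetric])
    also have "int (2 ^ (m - 1)) + int (2 ^ (m - 1)) = int (ord a)" using oa m2 by (cases m) auto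
    also have "a [^] (int (ord a)) = \<one>" using ac by (simp add: int_pow_int)
    finally have c4: "c [^] (4::nat) = \<one>" .
    have "c [^] (4::nat) = inv h \<otimes> a [^] (4::nat) \<otimes> h" unfolding c_def by (rule conj_pow_nat[OF hc ac])
    then have "inv h \<otimes> a [^] (4::nat) \<otimes> h = \<one>" using c4 by simp
    then have "h \<otimes> (inv h \<otimes> a [^] (4::nat) \<otimes> h) \<otimes> inv h = \<one>" using hc by simp
    then have "a [^] (4::nat) = \<one>" using hc ac by (simp add: m_assoc)
    then have "ord a dvd 4" using pow_eq_id[OF ac] by simp
    then have "ord a \<le> 4" by (simp add: dvd_imp_le)
    moreover have "(2::nat) ^ m \<ge> 2 ^ 3" using m3 by (intro power_increasing) auto
    ultimately show False using oa by simp
  qed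
  then have "h \<in> Q" using NA[OF hc] unfolding c_def by blast
  then show False using h by blast
qed

lemma Q_all_2:
  assumes m2': "m = 2"
  shows "Q = carrier G"
proof (rule ccontr)
  assume ne: "Q \<noteq> carrier G"
  then obtain h where hc: "h \<in> carrier G" and hQ: "h \<notin> Q" using Q_carrier by blast
  have oa4: "ord a = 4" using oa m2' by simp
  have p4: "x [^] (4::nat) = \<one>" if xc: "x \<in> carrier G" for x
  proof -
    obtain e where e: "ord x = 2 ^ e" using ord_pp[OF xc] p2 by blast
    have "(2::nat) ^ e \<le> 2 ^ 2" using amax[OF xc] oa4 e by simp
    then have "e \<le> 2" using power_le_imp_le_exp by (metis one_less_numeral_iff semiring_norm(76))
    then have "(2::nat) ^ e dvd 2 ^ 2" by (rule le_imp_power_dvd)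
    then have "ord x dvd 4" using e by simp
    then show ?thesis using pow_eq_id[OF xc] by simp
  qed
  define z0 where "z0 = a [^] (2::nat)"
  have z0c: "z0 \<in> carrier G" unfolding z0_def using ac by simp
  have z0sq: "z0 \<otimes> z0 = \<one>"
  proof -
    have "z0 \<otimes> z0 = a [^] (4::nat)" unfolding z0_def using ac by (simp add: nat_pow_mult)
    then show ?thesis using p4[OF ac] by simp
  qed
  have z01: "z0 \<noteq> \<one>"
  proof
    assume "z0 = \<one>"
    then have "ord a dvd 2" using pow_eq_id[OF ac] unfolding z0_def by simp
    then show False using oa4 by simp
  qed
  have zset: "generate G {z} = {\<one>, z0}"
  proof -
    have "z0 [^] p = \<one>" using z0sq z0c p2 by (simp add: numeral_2_eq_2)
    then have "z0 \<in> generate G {z}" using U[OF z0c] by simp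
    moreover have "\<one> \<in> generate G {z}" using gen_sg[OF zc] subgroup.one_closed by blast
    ultimately have sub: "{\<one>, z0} \<subseteq> generate G {z}" by blast
    have fin': "finite (generate G {z})" using fin gen_carrier[OF zc] finite_subset by blast
    have "card (generate G {z}) = 2" using card_gen[OF zc] zo p2 by simp
    moreover have "card {\<one>, z0} = 2" using z01 by simp
    ultimately show ?thesis using card_subset_eq[OF fin' sub] by simp
  qed
  have sqz: "x \<otimes> x = z0" if xc: "x \<in> carrier G" and xz: "x \<notin> generate G {z}" for x
  proof -
    have "(x \<otimes> x) [^] p = x [^] (4::nat)" using xc p2 by (simp add: numeral_eq_Suc m_assoc)
    then have "(x \<otimes> x) [^] p = \<one>" using p4[OF xc] by simp
    then have "x \<otimes> x \<in> {\<one>, z0}" using U[of "x \<otimes> x"] xc zset by simp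
    moreover have "x \<otimes> x \<noteq> \<one>"
    proof
      assume "x \<otimes> x = \<one>"
      then have "x [^] p = \<one>" using xc p2 by (simp add: numeral_2_eq_2)
      then show False using U[OF xc] xz by simp
    qed
    ultimately show ?thesis by blast
  qed
  have zcomm: "z0 \<otimes> x = x \<otimes> z0" if xc: "x \<in> carrier G" and xz: "x \<notin> generate G {z}" for x
    using sqz[OF xc xz] xc by (metis m_assoc)
  have invz: "inv x = x \<otimes> z0" if xc: "x \<in> carrier G" and xz: "x \<notin> generate G {z}" for x
  proof (rule inv_equality)
    have "x \<otimes> z0 \<otimes> x = x \<otimes> (z0 \<otimes> x)" using xc z0c by (simp add: m_assoc)
    also have "\<dots> = x \<otimes> x \<otimes> z0" using zcomm[OF xc xz] xc z0c by (simp add: m_assoc)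
    also have "\<dots> = \<one>" using sqz[OF xc xz] z0sq by simp
    finally show "x \<otimes> z0 \<otimes> x = \<one>" .
  qed (use xc z0c in auto)
  have AC: "y \<otimes> x = x \<otimes> y \<otimes> z0" if xc: "x \<in> carrier G" and yc: "y \<in> carrier G"
    and xz: "x \<notin> generate G {z}" and yz: "y \<notin> generate G {z}" and xyz: "x \<otimes> y \<notin> generate G {z}" for x y
  proof -
    have xy: "x \<otimes> y \<in> carrier G" using xc yc by simp
    have "y \<otimes> x = inv x \<otimes> ((x \<otimes> y) \<otimes> (x \<otimes> y)) \<otimes> inv y" using xc yc by (simp add: m_assoc)
    also have "\<dots> = inv x \<otimes> z0 \<otimes> inv y" using sqz[OF xy xyz] by simp
    also have "\<dots> = (x \<otimes> z0) \<otimes> z0 \<otimes> (y \<otimes> z0)" using invz[OF xc xz] invz[OF yc yz] by simp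
    also have "\<dots> = x \<otimes> (z0 \<otimes> z0) \<otimes> y \<otimes> z0" using xc yc z0c by (simp add: m_assoc)
    also have "\<dots> = x \<otimes> y \<otimes> z0" using z0sq xc by simp
    finally show ?thesis .
  qed
  have zA': "generate G {z} \<subseteq> generate G {a}" by (rule zA)
  have sgA: "subgroup (generate G {a}) G" by (rule gen_sg[OF ac])
  have sgQ: "subgroup Q G" by (rule Q_sub)
  have az: "a \<notin> generate G {z}"
  proof
    assume "a \<in> generate G {z}"
    then have "a = z0" using zset a1 by simp
    then have "a \<otimes> \<one> = a \<otimes> a" unfolding z0_def using ac by (simp add: numeral_2_eq_2)
    then show False using a1 ac by (metis l_cancel one_closed)
  qed
  have gz: "g \<notin> generate G {z}" using gA zA' by blast
  have hz: "h \<notin> generate G {z}" using hQ zA' A_Q by blast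
  have agz: "a \<otimes> g \<notin> generate G {z}"
  proof
    assume "a \<otimes> g \<in> generate G {z}"
    then have "a \<otimes> g \<in> generate G {a}" using zA' by blast
    moreover have "inv a \<in> generate G {a}" using subgroup.m_inv_closed[OF sgA gen_self[OF ac]] .
    ultimately have "inv a \<otimes> (a \<otimes> g) \<in> generate G {a}" using subgroup.m_closed[OF sgA] by blast
    then show False using gA ac gc by simp
  qed
  have ahz: "a \<otimes> h \<notin> generate G {z}"
  proof
    assume "a \<otimes> h \<in> generate G {z}"
    then have "a \<otimes> h \<in> generate G {a}" using zA' by blast
    moreover have "inv a \<in> generate G {a}" using subgroup.m_inv_closed[OF sgA gen_self[OF ac]] .
    ultimately have "inv a \<otimes> (a \<otimes> h) \<in> generate G {a}" using subgroup.m_closed[OF sgA] by blast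
    then show False using hQ A_Q ac hc by auto
  qed
  have ga: "g \<otimes> a = a \<otimes> g \<otimes> z0" by (rule AC[OF ac gc az gz agz])
  have ha: "h \<otimes> a = a \<otimes> h \<otimes> z0" by (rule AC[OF ac hc az hz ahz])
  have ah: "a \<otimes> h = h \<otimes> a \<otimes> z0"
  proof -
    have "h \<otimes> a \<otimes> z0 = a \<otimes> h \<otimes> (z0 \<otimes> z0)" using ha ac hc z0c by (simp add: m_assoc)
    then show ?thesis using z0sq ac hc by simp
  qed
  define w where "w = h \<otimes> a \<otimes> g"
  have wc: "w \<in> carrier G" unfolding w_def using hc ac gc by simp
  have "w \<otimes> a = h \<otimes> a \<otimes> (g \<otimes> a)" unfolding w_def using hc ac gc by (simp add: m_assoc)
  also have "\<dots> = h \<otimes> a \<otimes> a \<otimes> (g \<otimes> z0)" using ga hc ac gc z0c by (simp add: m_assoc)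
  finally have e1: "w \<otimes> a = h \<otimes> a \<otimes> a \<otimes> (g \<otimes> z0)" .
  have "a \<otimes> w = (a \<otimes> h) \<otimes> a \<otimes> g" unfolding w_def using hc ac gc by (simp add: m_assoc)
  also have "\<dots> = h \<otimes> a \<otimes> (z0 \<otimes> a) \<otimes> g" using ah hc ac gc z0c by (simp add: m_assoc)
  also have "\<dots> = h \<otimes> a \<otimes> a \<otimes> (z0 \<otimes> g)" using zcomm[OF ac az] hc ac gc z0c by (simp add: m_assoc)
  also have "\<dots> = h \<otimes> a \<otimes> a \<otimes> (g \<otimes> z0)" using zcomm[OF gc gz] by simp
  finally have "a \<otimes> w = w \<otimes> a" using e1 by simp
  then have "w \<in> generate G {a}" using lemmaC[OF ac wc _ amax[OF wc]] by simp
  then have wQ: "w \<in> Q" using A_Q by blast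
  have aQ: "a \<in> Q" using A_Q gen_self[OF ac] by blast
  have "h = w \<otimes> inv g \<otimes> inv a" unfolding w_def using hc ac gc by (simp add: m_assoc)
  moreover have "w \<otimes> inv g \<otimes> inv a \<in> Q"
    using wQ gQ aQ subgroup.m_closed[OF sgQ] subgroup.m_inv_closed[OF sgQ] by simp
  ultimately show False using hQ by simp
qed

end

context pU begin

theorem classify: "is_cyclic_group G \<or> (\<exists>n. is_gen_quaternion G n)"
proof -
  obtain a where ac: "a \<in> carrier G" and amax: "\<forall>y\<in>carrier G. ord y \<le> ord a" using exists_max by blast
  show ?thesis
  proof (cases "generate G {a} = carrier G")
    case True
    then show ?thesis unfolding is_cyclic_group_def using ac by blast
  next
    case False
    have a1: "a \<noteq> \<one>"
    proof
      assume "a = \<one>"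
      then have "ord z \<le> 1" using amax zc by fastforce
      then show False using zo p_gt1 by simp
    qed
    define A where "A = generate G {a}"
    have sgA: "subgroup A G" unfolding A_def by (rule gen_sg[OF ac])
    obtain g0 where g0: "g0 \<in> carrier G - A" and g0n: "\<forall>x\<in>A. inv g0 \<otimes> x \<otimes> g0 \<in> A"
      using norm_grow[OF sgA] False unfolding A_def by blast
    define P where "P = (\<lambda>n. \<exists>k\<in>carrier G. k \<notin> A \<and> inv k \<otimes> a \<otimes> k \<in> A \<and> ord k = n)"
    have aA: "a \<in> A" unfolding A_def by (rule gen_self[OF ac])
    have "P (ord g0)" unfolding P_def using g0 g0n aA by blast
    then have "P (LEAST n. P n)" by (rule LeastI)
    then obtain g where gc: "g \<in> carrier G" and gA: "g \<notin> A" and gn: "inv g \<otimes> a \<otimes> g \<in> A"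
      and go: "ord g = (LEAST n. P n)" unfolding P_def by blast
    have gmin: "ord g \<le> ord k" if "k \<in> carrier G" "k \<notin> A" "inv k \<otimes> a \<otimes> k \<in> A" for k
    proof -
      have "P (ord k)" unfolding P_def using that by blast
      then show ?thesis using go Least_le by metis
    qed
    obtain r :: int where r: "inv g \<otimes> a \<otimes> g = a [^] r" using gen_elem_int[OF ac] gn unfolding A_def by blast
    have g1: "g \<noteq> \<one>" using gA sgA subgroup.one_closed by blast
    define gp where "gp = g [^] p"
    have gpc: "gp \<in> carrier G" unfolding gp_def using gc by simp
    have "inv gp \<otimes> a \<otimes> gp = a [^] (r ^ p)" unfolding gp_def by (rule conj_iter[OF gc ac r])
    then have gpn: "inv gp \<otimes> a \<otimes> gp \<in> A" unfolding A_def using gen_pow_int[OF ac] by simp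
    obtain c where "p dvd ord g" using elem_p[OF gc g1] by blast
    then have "ord gp = ord g div p" unfolding gp_def using ord_pow[OF gc] p_gt1 by simp
    then have "ord gp < ord g" using ord_pos[OF gc] p_gt1 by simp
    then have "gp \<in> A" using gmin[OF gpc _ gpn] by fastforce
    then obtain s :: int where s: "g [^] p = a [^] s" using gen_elem_int[OF ac] unfolding A_def gp_def by blast
    have amax': "\<And>y. y \<in> carrier G \<Longrightarrow> ord y \<le> ord a" using amax by blast
    have gA': "g \<notin> generate G {a}" using gA unfolding A_def .
    have ana: "p = 2 \<and> (\<exists>m\<ge>2. ord a = 2 ^ m \<and> inv g \<otimes> a \<otimes> g = inv a \<and> g [^] (2::nat) = a [^] ((2::nat) ^ (m - 1)))"
      by (rule ANA[OF ac amax' a1 gc gA' r s])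
    then obtain m where p2: "p = 2" and m2: "m \<ge> 2" and oa: "ord a = 2 ^ m"
      and c1: "inv g \<otimes> a \<otimes> g = inv a" and c2: "g [^] (2::nat) = a [^] ((2::nat) ^ (m - 1))" by blast
    interpret C: cls G p z a g m
    by unfold_locales (use ac amax' a1 p2 m2 oa gc gA' c1 c2 in auto)
    have Qall: "C.Q = carrier G"
    proof (cases "m = 2")
      case True then show ?thesis by (rule C.Q_all_2)
    next
      case False then show ?thesis using m2 by (intro C.Q_all_3) simp
    qed
    have "order G = 2 * ord a" unfolding order_def using C.card_Q_eq[OF fin gA'] Qall by simp
    then have ordG: "order G = 2 ^ (m + 1)" using oa by simp
    have "is_gen_quaternion G (m + 1)"
      unfolding is_gen_quaternion_def
    proof (intro conjI bexI)
      show "3 \<le> m + 1" using m2 by simp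
      show "order G = 2 ^ (m + 1)" by (rule ordG)
      show "generate G {a, g} = carrier G" using C.Q_gen Qall by simp
      show "a [^] ((2::nat) ^ (m + 1 - 2)) = g [^] (2::nat)" using c2 m2 by (simp add: numeral_2_eq_2)
      show "a [^] ((2::nat) ^ (m + 1 - 1)) = \<one>" using oa pow_ord_eq_1[OF ac] by simp
      show "inv g \<otimes> a \<otimes> g = inv a" by (rule c1)
    qed (use ac gc in auto)
    then show ?thesis by blast
  qed
qed

end

context group begin

lemma conj_set_mem: "y \<in> conj_set G g K \<longleftrightarrow> (\<exists>k\<in>K. y = g \<otimes> k \<otimes> inv g)"
  unfolding conj_set_def by blast

lemma conj_set_one: "K \<subseteq> carrier G \<Longrightarrow> conj_set G \<one> K = K"
  unfolding conj_set_def by force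

lemma cls_le_sub: "K' \<subseteq> K \<Longrightarrow> K \<subseteq> carrier G \<Longrightarrow> cls_le G K' K"
  unfolding cls_le_def using conj_set_one one_closed by metis

lemma central_conj:
  assumes g: "g \<in> carrier G" and u: "u \<in> carrier G" and cu: "\<forall>y\<in>carrier G. u \<otimes> y = y \<otimes> u"
    and K: "K \<subseteq> carrier G" and uK: "u \<in> conj_set G g K"
  shows "u \<in> K"
proof -
  obtain k where k: "k \<in> K" "u = g \<otimes> k \<otimes> inv g" using uK conj_set_mem by blast
  have kc: "k \<in> carrier G" using k K by blast
  have "k = inv g \<otimes> u \<otimes> g" using k g kc by (simp add: m_assoc)
  also have "\<dots> = inv g \<otimes> (g \<otimes> u)" using cu g u by (simp add: m_assoc)
  also have "\<dots> = u" using g u by simp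
  finally show ?thesis using k by simp
qed

lemma central_conj2:
  assumes g: "g \<in> carrier G" and k: "k \<in> carrier G" and ck: "\<forall>y\<in>carrier G. k \<otimes> y = y \<otimes> k"
  shows "g \<otimes> k \<otimes> inv g = k"
  using assms by (simp add: m_assoc)

end

context pgrp begin

lemma ordp: "x \<in> carrier G \<Longrightarrow> x [^] p = \<one> \<Longrightarrow> x \<noteq> \<one> \<Longrightarrow> ord x = p"
proof -
  assume x: "x \<in> carrier G" and xp: "x [^] p = \<one>" and x1: "x \<noteq> \<one>"
  have "ord x dvd p" using pow_eq_id[OF x] xp by simp
  then have "ord x = 1 \<or> ord x = p" using pp prime_nat_iff by blast
  then show ?thesis using x1 ord_eq_1[OF x] by blast
qed

lemma bp_U:
  assumes bp: "has_breaking_point G"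
  shows "\<exists>z. pU G p z"
proof -
  obtain x0 where x0c: "x0 \<in> carrier G" and nt: "generate G {x0} \<noteq> {\<one>}" and np: "generate G {x0} \<noteq> carrier G"
    and bpx: "\<forall>y\<in>carrier G. cls_le G (generate G {y}) (generate G {x0}) \<or> cls_le G (generate G {x0}) (generate G {y})"
    using bp unfolding has_breaking_point_def by blast
  have x01: "x0 \<noteq> \<one>" using nt generate_one by auto
  have "order G \<noteq> 1"
  proof
    assume "order G = 1"
    then have "carrier G = {\<one>}" using order_one_triv_iff by blast
    then show False using x0c x01 by blast
  qed
  then obtain w where wc: "w \<in> carrier G" and w1: "w \<noteq> \<one>" and cw: "\<forall>y\<in>carrier G. w \<otimes> y = y \<otimes> w"
    using center_exists by blast
  obtain z where zw: "z \<in> generate G {w}" and zo: "ord z = p" and zdef: "z = w [^] (ord w div p)"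
    using elem_p[OF wc w1] by blast
  have zc: "z \<in> carrier G" using zw gen_carrier[OF wc] by blast
  have cz: "\<forall>y\<in>carrier G. z \<otimes> y = y \<otimes> z"
    using cw wc zdef group_commutes_pow[OF _ wc] by (metis group_commutes_pow)
  have z1: "z \<noteq> \<one>" using zo p_gt1 ord_eq_1[OF zc] by auto
  have zpow: "z [^] (n::nat) \<in> carrier G \<and> (\<forall>y\<in>carrier G. z [^] n \<otimes> y = y \<otimes> z [^] n)" for n
    using zc cz group_commutes_pow by (metis nat_pow_closed)
  have genz: "generate G {z} = {z [^] k | k. k \<in> (UNIV :: nat set)}"
    using generate_pow_nat[OF zc] ord_pos[OF zc] by simp
  have cgz: "\<forall>y\<in>carrier G. u \<otimes> y = y \<otimes> u" if "u \<in> generate G {z}" for u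
    using that genz zpow by auto
  have gzc: "generate G {z} \<subseteq> carrier G" by (rule gen_carrier[OF zc])
  have gx0c: "generate G {x0} \<subseteq> carrier G" by (rule gen_carrier[OF x0c])
  have finz: "finite (generate G {z})" using fin gzc finite_subset by blast
  have zx0: "z \<in> generate G {x0}"
  proof -
    from bpx zc consider "cls_le G (generate G {z}) (generate G {x0})" | "cls_le G (generate G {x0}) (generate G {z})"
      by blast
    then show ?thesis
    proof cases
      case 1
      then obtain g where g: "g \<in> carrier G" "generate G {z} \<subseteq> conj_set G g (generate G {x0})"
        unfolding cls_le_def by blast
      then have "z \<in> conj_set G g (generate G {x0})" using gen_self[OF zc] by blast
      then show ?thesis using central_conj[OF g(1) zc cz gx0c] by blast
    next
      case 2
      then obtain g where g: "g \<in> carrier G" "generate G {x0} \<subseteq> conj_set G g (generate G {z})"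
        unfolding cls_le_def by blast
      have sub: "generate G {x0} \<subseteq> generate G {z}"
      proof
        fix u assume "u \<in> generate G {x0}"
        then obtain k where k: "k \<in> generate G {z}" "u = g \<otimes> k \<otimes> inv g" using g conj_set_mem by blast
        have "u = k" using k central_conj2[OF g(1) _ cgz[OF k(1)]] gzc by blast
        then show "u \<in> generate G {z}" using k by simp
      qed
      have "card (generate G {x0}) \<le> card (generate G {z})" using card_mono[OF finz sub] .
      then have le: "ord x0 \<le> p" using card_gen[OF x0c] card_gen[OF zc] zo by simp
      obtain e where e: "ord x0 = p ^ e" using ord_pp[OF x0c] by blast
      have "e \<noteq> 0" using e x01 ord_eq_1[OF x0c] by auto
      then have "p ^ 1 \<le> p ^ e" using p_gt1 by (intro power_increasing) auto
      then have "ord x0 = p" using le e by simp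
      then have "generate G {x0} = generate G {z}" using gen_eq_card[OF fin zc x0c sub] zo by simp
      then show ?thesis using gen_self[OF zc] by simp
    qed
  qed
  have Uz: "y \<in> generate G {z}" if yc: "y \<in> carrier G" and yp: "y [^] p = \<one>" for y
  proof (cases "y = \<one>")
    case True
    then show ?thesis using gen_sg[OF zc] subgroup.one_closed by blast
  next
    case False
    have oy: "ord y = p" by (rule ordp[OF yc yp False])
    from bpx yc consider "cls_le G (generate G {y}) (generate G {x0})" | "cls_le G (generate G {x0}) (generate G {y})"
      by blast
    then show ?thesis
    proof cases
      case 1
      then obtain g where g: "g \<in> carrier G" "generate G {y} \<subseteq> conj_set G g (generate G {x0})"
        unfolding cls_le_def by blast
      then have "y \<in> conj_set G g (generate G {x0})" using gen_self[OF yc] by blast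
      then obtain k where k: "k \<in> generate G {x0}" "y = g \<otimes> k \<otimes> inv g" using conj_set_mem by blast
      have kc: "k \<in> carrier G" using k gx0c by blast
      have ky: "k = inv g \<otimes> y \<otimes> g" using k g kc by (simp add: m_assoc)
      have "k [^] p = inv g \<otimes> y [^] p \<otimes> g" using ky conj_pow_nat[OF g(1) yc] by simp
      then have kp: "k [^] p = \<one>" using yp g by simp
      have k1: "k \<noteq> \<one>"
      proof
        assume "k = \<one>"
        then have "y = \<one>" using k(2) g(1) by simp
        then show False using False by simp
      qed
      have ok: "ord k = p" by (rule ordp[OF kc kp k1])
      have "generate G {k} = generate G {x0 [^] (ord x0 div p)}" by (rule ord_p_unique[OF x0c k(1) ok])
      moreover have "generate G {z} = generate G {x0 [^] (ord x0 div p)}" by (rule ord_p_unique[OF x0c zx0 zo])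
      ultimately have "k \<in> generate G {z}" using gen_self[OF kc] by simp
      then have "y = k" using k central_conj2[OF g(1) kc] cgz by simp
      then show ?thesis using \<open>k \<in> generate G {z}\<close> by simp
    next
      case 2
      then obtain g where g: "g \<in> carrier G" "generate G {x0} \<subseteq> conj_set G g (generate G {y})"
        unfolding cls_le_def by blast
      then have "z \<in> conj_set G g (generate G {y})" using zx0 by blast
      then have "z \<in> generate G {y}" using central_conj[OF g(1) zc cz gen_carrier[OF yc]] by blast
      then have "generate G {z} \<subseteq> generate G {y}" using gen_sub[OF yc] by blast
      then have "generate G {z} = generate G {y}" using gen_eq_card[OF fin yc zc] oy zo by simp
      then show ?thesis using gen_self[OF yc] by simp
    qed
  qed
  have "pU G p z"
    by unfold_locales (use zc zo Uz in auto)
  then show ?thesis by blast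
qed

lemma bp_order:
  assumes bp: "has_breaking_point G"
  shows "order G \<ge> p ^ 2"
proof -
  obtain x0 where x0c: "x0 \<in> carrier G" and nt: "generate G {x0} \<noteq> {\<one>}" and np: "generate G {x0} \<noteq> carrier G"
    using bp unfolding has_breaking_point_def by blast
  have x01: "x0 \<noteq> \<one>" using nt generate_one by auto
  obtain k where k: "order G = p ^ k" using pk by blast
  obtain e where e: "ord x0 = p ^ e" using ord_pp[OF x0c] by blast
  have "e \<noteq> 0" using e x01 ord_eq_1[OF x0c] by auto
  have "card (generate G {x0}) < card (carrier G)"
    using gen_carrier[OF x0c] np fin by (meson psubsetI psubset_card_mono)
  then have "p ^ e < p ^ k" using card_gen[OF x0c] e k by (simp add: order_def)
  then have "e < k" using p_gt1 power_less_imp_less_exp by blast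
  then have "2 \<le> k" using \<open>e \<noteq> 0\<close> by simp
  then have "p ^ 2 \<le> p ^ k" using p_gt1 by (intro power_increasing) auto
  then show ?thesis using k by simp
qed

end

context pgrp begin

lemma cyc_bp:
  assumes cy: "is_cyclic_group G" and og: "order G \<ge> p ^ 2"
  shows "has_breaking_point G"
proof -
  obtain x where xc: "x \<in> carrier G" and gx: "generate G {x} = carrier G"
    using cy unfolding is_cyclic_group_def by blast
  obtain k where k: "order G = p ^ k" using pk by blast
  have "p ^ 2 \<le> p ^ k" using og k by simp
  then have k2: "2 \<le> k" using p_gt1 power_le_imp_le_exp by blast
  have x1: "x \<noteq> \<one>"
  proof
    assume "x = \<one>"
    then have "carrier G = {\<one>}" using gx generate_one by simp
    then have "order G = 1" by (simp add: order_def)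
    then show False using og p_gt1 by (metis less_le_trans nat_less_le one_less_power pos2 le_antisym zero_less_numeral)
  qed
  obtain c where cx: "c \<in> generate G {x}" and co: "ord c = p" and cdef: "c = x [^] (ord x div p)"
    using elem_p[OF xc x1] by blast
  have cc: "c \<in> carrier G" using cx gen_carrier[OF xc] by blast
  have c1: "c \<noteq> \<one>" using co p_gt1 ord_eq_1[OF cc] by auto
  show ?thesis unfolding has_breaking_point_def
  proof (intro bexI conjI ballI)
    show "c \<in> carrier G" by (rule cc)
    show "generate G {c} \<noteq> {\<one>}" using gen_self[OF cc] c1 by blast
    show "generate G {c} \<noteq> carrier G"
    proof
      assume "generate G {c} = carrier G"
      then have "p = p ^ k" using card_gen[OF cc] co k by (simp add: order_def)
      moreover have "p ^ 1 < p ^ k" using k2 p_gt1 by (intro power_strict_increasing) auto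
      ultimately show False by simp
    qed
    fix y assume yc: "y \<in> carrier G"
    show "cls_le G (generate G {y}) (generate G {c}) \<or> cls_le G (generate G {c}) (generate G {y})"
    proof (cases "y = \<one>")
      case True
      have "generate G {y} \<subseteq> generate G {c}" using True generate_one gen_sg[OF cc] subgroup.one_closed by auto
      then show ?thesis using cls_le_sub gen_carrier[OF cc] by blast
    next
      case False
      obtain y' where y': "y' \<in> generate G {y}" "ord y' = p" using elem_p[OF yc False] by blast
      have y'x: "y' \<in> generate G {x}" using y' gen_carrier[OF yc] gx by blast
      have "generate G {y'} = generate G {x [^] (ord x div p)}" by (rule ord_p_unique[OF xc y'x y'(2)])
      then have "c \<in> generate G {y'}" using cdef gen_self[OF cc] by simp
      then have "c \<in> generate G {y}" using gen_sub[OF yc y'(1)] by blast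
      then have "generate G {c} \<subseteq> generate G {y}" using gen_sub[OF yc] by blast
      then show ?thesis using cls_le_sub gen_carrier[OF yc] by blast
    qed
  qed
qed

lemma quat_bp:
  assumes q: "is_gen_quaternion G n"
  shows "has_breaking_point G"
proof -
  obtain a b where n3: "n \<ge> 3" and og: "order G = 2 ^ n" and ac: "a \<in> carrier G" and bc: "b \<in> carrier G"
    and gen: "generate G {a, b} = carrier G" and r1: "a [^] ((2::nat) ^ (n - 2)) = b [^] (2::nat)"
    and r2: "a [^] ((2::nat) ^ (n - 1)) = \<one>" and r3: "inv b \<otimes> a \<otimes> b = inv a"
    using q unfolding is_gen_quaternion_def by blast
  obtain k where k: "order G = p ^ k" using pk by blast
  have "(2::nat) dvd 2 ^ n" using n3 by simp
  then have "2 dvd p ^ k" using og k by simp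
  then have "2 dvd p" using prime_dvd_power[of 2 p k] by simp
  then have p2: "p = 2" using pp prime_nat_iff by (metis numeral_eq_one_iff semiring_norm(85))
  have hh: "(2 * 2 ^ (n - 2) :: nat) = 2 ^ (n - 1)"
  proof -
    have "n - 1 = Suc (n - 2)" using n3 by simp
    then show ?thesis by simp
  qed
  interpret Qg: qgrp G a b "2 ^ (n - 2)"
    by unfold_locales (use ac bc r1 r2 r3 hh in auto)
  have Qc: "Qg.Q = carrier G" using Qg.Q_gen gen by simp
  have "2 ^ n \<le> 2 * ord a" using Qg.card_Q_le[OF fin] Qc og by (simp add: order_def)
  moreover have "ord a dvd 2 ^ (n - 1)" using r2 pow_eq_id[OF ac] by simp
  ultimately have oa: "ord a = 2 ^ (n - 1)"
  proof -
    assume le: "2 ^ n \<le> 2 * ord a" and d: "ord a dvd 2 ^ (n - 1)"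
    have "(2::nat) ^ n = 2 * 2 ^ (n - 1)" using n3 by (cases n) auto
    then have "2 ^ (n - 1) \<le> ord a" using le by simp
    moreover have "ord a \<le> 2 ^ (n - 1)" using d by (simp add: dvd_imp_le)
    ultimately show ?thesis by simp
  qed
  define z where "z = a [^] ((2::nat) ^ (n - 2))"
  have zc: "z \<in> carrier G" unfolding z_def using ac by simp
  have z1: "z \<noteq> \<one>"
  proof
    assume "z = \<one>"
    then have "ord a dvd 2 ^ (n - 2)" using pow_eq_id[OF ac] unfolding z_def by simp
    then have "(2::nat) ^ (n - 1) \<le> 2 ^ (n - 2)" using oa by (simp add: dvd_imp_le)
    then have "n - 1 \<le> n - 2" by (simp add: power_le_imp_le_exp)
    then show False using n3 by simp
  qed
  have zz: "z [^] (2::nat) = \<one>" unfolding z_def using ac r2 hh by (simp add: nat_pow_pow mult.commute)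
  have oz: "ord z = 2" using ordp[OF zc] zz z1 p2 by simp
  have key: "z \<in> generate G {x}" if xc: "x \<in> carrier G" and x1: "x \<noteq> \<one>" for x
  proof -
    obtain y where y: "y \<in> generate G {x}" "ord y = p" using elem_p[OF xc x1] by blast
    have yc: "y \<in> carrier G" using y gen_carrier[OF xc] by blast
    have yy: "y \<otimes> y = \<one>" using pow_ord_eq_1[OF yc] y(2) p2 yc by (simp add: numeral_2_eq_2)
    have "y \<in> Qg.Q" using yc Qc by simp
    then consider i where "y = a [^] (i::int)" | i where "y = a [^] (i::int) \<otimes> b" using Qg.Q_mem by blast
    then have "y \<in> generate G {z}"
    proof cases
      case 1
      have "a [^] (i + i) = a [^] i \<otimes> a [^] i" by (rule int_pow_mult[OF ac])
      then have "a [^] (i + i) = \<one>" using yy 1 by simp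
      then have d: "int (ord a) dvd i + i" using int_pow_eq_id[OF ac] by blast
      have "int (ord a) = int (2 * 2 ^ (n - 2))" using oa hh by simp
      also have "\<dots> = 2 * int (2 ^ (n - 2))" by simp
      finally have oa': "int (ord a) = 2 * int (2 ^ (n - 2))" .
      have e2: "i + i = 2 * i" by simp
      have "2 * int (2 ^ (n - 2)) dvd 2 * i" using d unfolding e2 oa' .
      then have "int (2 ^ (n - 2)) dvd i" by (simp only: dvd_mult_cancel_left) simp
      then obtain t where t: "i = int (2 ^ (n - 2)) * t" by (metis dvd_def)
      have "z = a [^] (int (2 ^ (n - 2)))" unfolding z_def by (rule int_pow_int[symmetric])
      then have "z [^] t = a [^] i" using t ac by (simp add: int_pow_pow)
      then show ?thesis using 1 gen_pow_int[OF zc, of t] by simp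
    next
      case 2
      have "y \<otimes> y = a [^] (int (2 ^ (n - 2)))" using 2 Qg.sq by simp
      also have "\<dots> = z" unfolding z_def by (rule int_pow_int)
      finally show ?thesis using yy z1 by simp
    qed
    then have "generate G {y} \<subseteq> generate G {z}" using gen_sub[OF zc] by blast
    then have "generate G {y} = generate G {z}" using gen_eq_card[OF fin zc yc] y(2) oz p2 by simp
    then have "z \<in> generate G {y}" using gen_self[OF zc] by simp
    then show ?thesis using gen_sub[OF xc y(1)] by blast
  qed
  show ?thesis unfolding has_breaking_point_def
  proof (intro bexI conjI ballI)
    show "z \<in> carrier G" by (rule zc)
    show "generate G {z} \<noteq> {\<one>}" using gen_self[OF zc] z1 by blast
    show "generate G {z} \<noteq> carrier G"
    proof
      assume "generate G {z} = carrier G"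
      then have "2 = (2::nat) ^ n" using card_gen[OF zc] oz og by (simp add: order_def)
      moreover have "(2::nat) ^ 1 < 2 ^ n" using n3 by (intro power_strict_increasing) auto
      ultimately show False by simp
    qed
    fix y assume yc: "y \<in> carrier G"
    show "cls_le G (generate G {y}) (generate G {z}) \<or> cls_le G (generate G {z}) (generate G {y})"
    proof (cases "y = \<one>")
      case True
      have "generate G {y} \<subseteq> generate G {z}" using True generate_one gen_sg[OF zc] subgroup.one_closed by auto
      then show ?thesis using cls_le_sub gen_carrier[OF zc] by blast
    next
      case False
      have "generate G {z} \<subseteq> generate G {y}" using key[OF yc False] gen_sub[OF yc] by blast
      then show ?thesis using cls_le_sub gen_carrier[OF yc] by blast
    qed
  qed
qed

end

theorem mainTheorem5:
  fixes G :: "('a, 'b) monoid_scheme" and p :: nat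
  assumes "group G" and "finite (carrier G)" and "Factorial_Ring.prime p"
    and "\<exists>k. order G = p ^ k"
  shows "has_breaking_point G \<longleftrightarrow>
           ((is_cyclic_group G \<and> order G \<ge> p ^ 2) \<or> (\<exists>n. is_gen_quaternion G n))"
proof -
  interpret P: pgrp G p using assms by (simp add: pgrp_def pgrp_axioms_def)
  show ?thesis
  proof
    assume bp: "has_breaking_point G"
    obtain z where "pU G p z" using P.bp_U[OF bp] by blast
    then interpret U: pU G p z .
    show "(is_cyclic_group G \<and> order G \<ge> p ^ 2) \<or> (\<exists>n. is_gen_quaternion G n)"
      using U.classify P.bp_order[OF bp] by blast
  next
    assume "(is_cyclic_group G \<and> order G \<ge> p ^ 2) \<or> (\<exists>n. is_gen_quaternion G n)"
    then show "has_breaking_point G" using P.cyc_bp P.quat_bp by blast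
  qed
qed


end
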